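(* Let $1\le p\le q<\infty$ and $k\in\mathbb{N}$. Let $\mathsf{M}_{p,q}(k)$ denote the least constant such that for every $n\ge k$, every function $f:\{-1,1\}^n\to\mathbb{R}$ of degree at most $k$ satisfies $\|f\|_q\le \mathsf{M}_{p,q}(k)\|f\|_p$. Then $\mathsf{M}_{p,q}(k)$ is also the least constant such that for every $n\ge k$, every function $f:\{-1,1\}^n\to\mathbb{R}$ satisfies $$\inf_{g\in \mathscr{P}^n_{>k}} \|f-g\|_{p^\ast} \leq \mathsf{M}_{p,q}(k) \inf_{g\in \mathscr{P}^n_{>k}} \|f-g\|_{q^\ast},$$ where for $r\in[1,\infty]$ the conjugate exponent $r^\ast$ is defined by $\frac1{r^\ast}+\frac1r=1$.
   Context: Every $f:\{-1,1\}^n\to\mathbb{R}$ has a unique Fourier–Walsh expansion $f=\sum_{S\subseteq\{1,\dots,n\}}\widehat f(S)w_S$, where $w_S(x)=\prod_{i\in S}x_i$. $f$ has degree at most $k$ if $\widehat f(S)=0$ whenever $|S|>k$. The $k$-th tail space is $\mathscr{P}^n_{>k}=\{f:\{-1,1\}^n\to\mathbb{R}:\ \widehat f(S)=0 \text{ whenever } |S|\le k\}$. For $r\in[1,\infty]$, $\|\cdot\|_r$ denotes the $L_r$ norm on $\{-1,1\}^n$ with respect to the uniform probability measure. *)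

theory Defs
  imports "HOL-Analysis.Analysis"
begin

text \<open>The discrete cube {-1,1}^n: points are functions on nat, with coordinates
  0..n-1 in {-1,1} and all other coordinates fixed to 1.\<close>
definition cube :: "nat \<Rightarrow> (nat \<Rightarrow> real) set" where
  "cube n = {x. (\<forall>i<n. x i = -1 \<or> x i = 1) \<and> (\<forall>i\<ge>n. x i = 1)}"

definition walsh :: "nat set \<Rightarrow> (nat \<Rightarrow> real) \<Rightarrow> real" where
  "walsh S x = (\<Prod>i\<in>S. x i)"

definition fcoeff :: "nat \<Rightarrow> ((nat \<Rightarrow> real) \<Rightarrow> real) \<Rightarrow> nat set \<Rightarrow> real" where
  "fcoeff n f S = (\<Sum>x\<in>cube n. f x * walsh S x) / 2 ^ n"

definition deg_le :: "nat \<Rightarrow> nat \<Rightarrow> ((nat \<Rightarrow> real) \<Rightarrow> real) \<Rightarrow> bool" where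
  "deg_le n k f \<longleftrightarrow> (\<forall>S. S \<subseteq> {..<n} \<longrightarrow> card S > k \<longrightarrow> fcoeff n f S = 0)"

definition tail_space :: "nat \<Rightarrow> nat \<Rightarrow> ((nat \<Rightarrow> real) \<Rightarrow> real) set" where
  "tail_space n k = {f. \<forall>S. S \<subseteq> {..<n} \<longrightarrow> card S \<le> k \<longrightarrow> fcoeff n f S = 0}"

definition lnorm :: "nat \<Rightarrow> ereal \<Rightarrow> ((nat \<Rightarrow> real) \<Rightarrow> real) \<Rightarrow> real" where
  "lnorm n r f = (case r of
      ereal r' \<Rightarrow> ((\<Sum>x\<in>cube n. \<bar>f x\<bar> powr r') / 2 ^ n) powr (1 / r')
    | PInfty \<Rightarrow> Max ((\<lambda>x. \<bar>f x\<bar>) ` cube n)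
    | MInfty \<Rightarrow> 0)"

definition conj_exp :: "real \<Rightarrow> ereal" where
  "conj_exp r = (if r = 1 then \<infinity> else ereal (r / (r - 1)))"

definition tail_dist :: "nat \<Rightarrow> nat \<Rightarrow> ereal \<Rightarrow> ((nat \<Rightarrow> real) \<Rightarrow> real) \<Rightarrow> real" where
  "tail_dist n k r f = (INF g\<in>tail_space n k. lnorm n r (\<lambda>x. f x - g x))"

definition least_elem :: "real set \<Rightarrow> real \<Rightarrow> bool" where
  "least_elem A M \<longleftrightarrow> M \<in> A \<and> (\<forall>C\<in>A. M \<le> C)"

end

theory Submission
  imports Defs
begin


lemma cube_Suc: "cube (Suc n) = (\<lambda>(x,s). x(n:=s)) ` (cube n \<times> {-1,1})"
proof
  show "cube (Suc n) \<subseteq> (\<lambda>(x,s). x(n:=s)) ` (cube n \<times> {-1,1})"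
  proof
    fix y assume y: "y \<in> cube (Suc n)"
    have 1: "y(n:=1) \<in> cube n" using y unfolding cube_def by simp
    have 2: "y n \<in> {-1,1}" using y unfolding cube_def by simp
    have 3: "y = (\<lambda>(x,s). x(n:=s)) (y(n:=1), y n)" by simp
    show "y \<in> (\<lambda>(x,s). x(n:=s)) ` (cube n \<times> {-1,1})"
      using 1 2 3 by blast
  qed
next
  show "(\<lambda>(x,s). x(n:=s)) ` (cube n \<times> {-1,1}) \<subseteq> cube (Suc n)"
  proof clarify
    fix x and s :: real assume x: "x \<in> cube n" and s: "s \<in> {-1,1}"
    show "x(n:=s) \<in> cube (Suc n)"
      unfolding cube_def
    proof (intro CollectI conjI allI impI)
      fix i assume "i < Suc n"
      thus "(x(n:=s)) i = -1 \<or> (x(n:=s)) i = 1"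
        using x s unfolding cube_def by (cases "i = n") auto
    next
      fix i assume "Suc n \<le> i"
      thus "(x(n:=s)) i = 1" using x unfolding cube_def by auto
    qed
  qed
qed

lemma cube_inj: "inj_on (\<lambda>(x,s). x(n:=s)) (cube n \<times> {-1,1})"
proof (rule inj_onI, clarify)
  fix x s x' s' assume a: "x \<in> cube n" "(s::real) \<in> {-1,1}" "x' \<in> cube n" "s' \<in> {-1,1}"
    and e: "x(n := s) = x'(n := s')"
  have "s = s'" using fun_cong[OF e, of n] by simp
  moreover have "x = x'"
  proof
    fix i show "x i = x' i"
    proof (cases "i = n")
      case True thus ?thesis using a unfolding cube_def by auto
    next
      case False thus ?thesis using fun_cong[OF e, of i] by simp
    qed
  qed
  ultimately show "x = x' \<and> s = s'" by simp
qed

lemma cube_0: "cube 0 = {\<lambda>_. 1}"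
  unfolding cube_def by auto

lemma finite_cube[simp]: "finite (cube n)"
  by (induction n) (auto simp: cube_0 cube_Suc)

lemma card_cube: "card (cube n) = 2 ^ n"
proof (induction n)
  case 0 thus ?case by (simp add: cube_0)
next
  case (Suc n)
  have "card (cube (Suc n)) = card (cube n \<times> {-1::real,1})"
    unfolding cube_Suc by (rule card_image[OF cube_inj])
  also have "\<dots> = 2 ^ Suc n" using Suc by (simp add: card_cartesian_product)
  finally show ?case .
qed

lemma one_in_cube: "(\<lambda>_. 1) \<in> cube n"
  unfolding cube_def by auto

lemma cube_nonempty[simp]: "cube n \<noteq> {}"
  using one_in_cube by blast

lemma sum_cube_Suc:
  "(\<Sum>y\<in>cube (Suc n). F y) = (\<Sum>x\<in>cube n. F (x(n:=1)) + F (x(n:=-1)))"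
proof -
  have "(\<Sum>y\<in>cube (Suc n). F y) = (\<Sum>(x,s)\<in>cube n \<times> {-1,1}. F (x(n:=s)))"
    unfolding cube_Suc by (subst sum.reindex[OF cube_inj]) (simp add: case_prod_unfold)
  also have "\<dots> = (\<Sum>x\<in>cube n. \<Sum>s\<in>{-1,1}. F (x(n:=s)))"
    by (subst sum.cartesian_product) simp
  also have "\<dots> = (\<Sum>x\<in>cube n. F (x(n:=1)) + F (x(n:=-1)))"
    by (simp add: add.commute)
  finally show ?thesis .
qed

lemma cube_sq: "x \<in> cube n \<Longrightarrow> x i * x i = 1"
  unfolding cube_def by (cases "i < n") auto

lemma cube_abs: "x \<in> cube n \<Longrightarrow> \<bar>x i\<bar> = 1"
  unfolding cube_def by (cases "i < n") auto

lemma cube_upd_self: "x \<in> cube n \<Longrightarrow> x(n:=1) = x"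
  unfolding cube_def by auto

lemma flip_cube: "x \<in> cube n \<Longrightarrow> i < n \<Longrightarrow> x(i := - x i) \<in> cube n"
  unfolding cube_def by auto

lemma sum_walsh_zero:
  assumes "U \<subseteq> {..<n}" "U \<noteq> {}"
  shows "(\<Sum>x\<in>cube n. walsh U x) = 0"
proof -
  obtain i where i: "i \<in> U" using assms by auto
  have iu: "i < n" using i assms by auto
  have fU: "finite U" using assms finite_subset by blast
  define \<sigma> where "\<sigma> x = x(i := - x i)" for x :: "nat \<Rightarrow> real"
  have w: "walsh U (\<sigma> x) = - walsh U x" for x
  proof -
    have "walsh U (\<sigma> x) = \<sigma> x i * (\<Prod>j\<in>U-{i}. \<sigma> x j)"
      unfolding walsh_def using prod.remove[OF fU i] by simp
    also have "(\<Prod>j\<in>U-{i}. \<sigma> x j) = (\<Prod>j\<in>U-{i}. x j)"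
      by (rule prod.cong) (auto simp: \<sigma>_def)
    also have "\<sigma> x i * (\<Prod>j\<in>U-{i}. x j) = - (x i * (\<Prod>j\<in>U-{i}. x j))"
      by (simp add: \<sigma>_def)
    also have "x i * (\<Prod>j\<in>U-{i}. x j) = walsh U x"
      unfolding walsh_def by (simp add: prod.remove[OF fU i])
    finally show ?thesis .
  qed
  have "(\<Sum>x\<in>cube n. walsh U x) = (\<Sum>x\<in>cube n. walsh U (\<sigma> x))"
    by (rule sum.reindex_bij_witness[where i=\<sigma> and j=\<sigma>])
       (auto simp: \<sigma>_def flip_cube iu)
  also have "\<dots> = - (\<Sum>x\<in>cube n. walsh U x)" by (simp add: w sum_negf)
  finally show ?thesis by simp
qed

lemma walsh_mult:
  assumes "x \<in> cube n" "finite S" "finite T"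
  shows "walsh S x * walsh T x = walsh ((S - T) \<union> (T - S)) x"
proof -
  have "walsh S x = (\<Prod>i\<in>S \<inter> T. x i) * (\<Prod>i\<in>S - T. x i)"
    unfolding walsh_def by (rule prod.Int_Diff[OF assms(2)])
  moreover have "walsh T x = (\<Prod>i\<in>S \<inter> T. x i) * (\<Prod>i\<in>T - S. x i)"
    unfolding walsh_def using prod.Int_Diff[OF assms(3), of _ S] by (simp add: Int_commute)
  moreover have "(\<Prod>i\<in>S \<inter> T. x i) * (\<Prod>i\<in>S \<inter> T. x i) = 1"
    by (simp add: prod.distrib[symmetric] cube_sq[OF assms(1)])
  moreover have "walsh ((S - T) \<union> (T - S)) x = (\<Prod>i\<in>S - T. x i) * (\<Prod>i\<in>T - S. x i)"
    unfolding walsh_def by (rule prod.union_disjoint) (use assms in auto)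
  ultimately show ?thesis by (simp add: algebra_simps)
qed

lemma walsh_empty[simp]: "walsh {} x = 1" by (simp add: walsh_def)

lemma sum_walsh: "U \<subseteq> {..<n} \<Longrightarrow> (\<Sum>x\<in>cube n. walsh U x) = (if U = {} then 2^n else 0)"
  using sum_walsh_zero[of U n] by (simp add: card_cube)


definition Ix :: "nat \<Rightarrow> nat \<Rightarrow> nat set set" where
  "Ix n k = {S. S \<subseteq> {..<n} \<and> card S \<le> k}"

lemma finite_Ix[simp]: "finite (Ix n k)"
  unfolding Ix_def by (rule finite_subset[of _ "Pow {..<n}"]) auto

definition polys :: "nat \<Rightarrow> nat \<Rightarrow> ((nat \<Rightarrow> real) \<Rightarrow> real) set" where
  "polys n k = {f. \<exists>c. \<forall>x\<in>cube n. f x = (\<Sum>S\<in>Ix n k. c S * walsh S x)}"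

lemma polys_cong: "f \<in> polys n k \<Longrightarrow> (\<And>x. x \<in> cube n \<Longrightarrow> g x = f x) \<Longrightarrow> g \<in> polys n k"
  unfolding polys_def by auto

lemma polys_zero: "(\<lambda>_. 0) \<in> polys n k"
  unfolding polys_def by (rule CollectI, rule exI[of _ "\<lambda>_. 0"]) simp

lemma polys_add: "f \<in> polys n k \<Longrightarrow> g \<in> polys n k \<Longrightarrow> (\<lambda>x. f x + g x) \<in> polys n k"
proof -
  assume "f \<in> polys n k" "g \<in> polys n k"
  then obtain c d where c: "\<forall>x\<in>cube n. f x = (\<Sum>S\<in>Ix n k. c S * walsh S x)"
    and d: "\<forall>x\<in>cube n. g x = (\<Sum>S\<in>Ix n k. d S * walsh S x)" unfolding polys_def by auto
  show ?thesis unfolding polys_def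
    by (rule CollectI, rule exI[of _ "\<lambda>S. c S + d S"])
       (simp add: c d distrib_right sum.distrib)
qed

lemma polys_scale: "f \<in> polys n k \<Longrightarrow> (\<lambda>x. a * f x) \<in> polys n k"
proof -
  assume "f \<in> polys n k"
  then obtain c where c: "\<forall>x\<in>cube n. f x = (\<Sum>S\<in>Ix n k. c S * walsh S x)"
    unfolding polys_def by auto
  show ?thesis unfolding polys_def
    by (rule CollectI, rule exI[of _ "\<lambda>S. a * c S"])
       (simp add: c sum_distrib_left mult.assoc)
qed

lemma polys_sum: "finite A \<Longrightarrow> (\<And>i. i \<in> A \<Longrightarrow> F i \<in> polys n k) \<Longrightarrow> (\<lambda>x. \<Sum>i\<in>A. F i x) \<in> polys n k"
proof (induction A rule: finite_induct)
  case empty thus ?case by (simp add: polys_zero)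
next
  case (insert a A)
  have "(\<lambda>x. F a x + (\<Sum>i\<in>A. F i x)) \<in> polys n k"
    by (rule polys_add) (use insert in auto)
  thus ?case using insert by simp
qed

lemma polys_walsh: "S \<subseteq> {..<n} \<Longrightarrow> card S \<le> k \<Longrightarrow> walsh S \<in> polys n k"
  unfolding polys_def
proof (rule CollectI, rule exI[of _ "\<lambda>T. if T = S then 1 else 0"], intro ballI)
  fix x assume "S \<subseteq> {..<n}" "card S \<le> k"
  hence "S \<in> Ix n k" unfolding Ix_def by auto
  have "(\<Sum>T\<in>Ix n k. (if T = S then 1 else 0) * walsh T x) = (\<Sum>T\<in>Ix n k. if T = S then walsh T x else 0)"
    by (rule sum.cong) auto
  thus "walsh S x = (\<Sum>T\<in>Ix n k. (if T = S then 1 else 0) * walsh T x)"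
    using \<open>S \<in> Ix n k\<close> by simp
qed

lemma polys_mono: "k \<le> k' \<Longrightarrow> f \<in> polys n k \<Longrightarrow> f \<in> polys n k'"
proof -
  assume kk: "k \<le> k'" and "f \<in> polys n k"
  then obtain c where c: "\<forall>x\<in>cube n. f x = (\<Sum>S\<in>Ix n k. c S * walsh S x)"
    unfolding polys_def by auto
  have "f = (\<lambda>x. f x)" by simp
  have "(\<lambda>x. \<Sum>S\<in>Ix n k. c S * walsh S x) \<in> polys n k'"
    by (rule polys_sum) (auto intro!: polys_scale polys_walsh simp: Ix_def intro: order_trans[OF _ kk])
  thus ?thesis by (rule polys_cong) (use c in auto)
qed

lemma card_symdiff_le: "finite S \<Longrightarrow> finite T \<Longrightarrow> card ((S - T) \<union> (T - S)) \<le> card S + card T"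
proof -
  assume f: "finite S" "finite T"
  have "card ((S - T) \<union> (T - S)) \<le> card (S - T) + card (T - S)" by (rule card_Un_le)
  also have "\<dots> \<le> card S + card T"
    using f by (intro add_mono card_mono) auto
  finally show ?thesis .
qed

lemma polys_mult:
  assumes "f \<in> polys n a" "g \<in> polys n b"
  shows "(\<lambda>x. f x * g x) \<in> polys n (a + b)"
proof -
  obtain c where c: "\<forall>x\<in>cube n. f x = (\<Sum>S\<in>Ix n a. c S * walsh S x)"
    using assms(1) unfolding polys_def by auto
  obtain d where d: "\<forall>x\<in>cube n. g x = (\<Sum>S\<in>Ix n b. d S * walsh S x)"
    using assms(2) unfolding polys_def by auto
  have P: "(\<lambda>x. \<Sum>S\<in>Ix n a. \<Sum>T\<in>Ix n b. c S * d T * walsh ((S - T) \<union> (T - S)) x) \<in> polys n (a+b)"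
  proof (intro polys_sum polys_scale polys_walsh)
    fix S T assume S: "S \<in> Ix n a" and T: "T \<in> Ix n b"
    have fin: "finite S" "finite T" using S T unfolding Ix_def by (auto intro: finite_subset)
    show "(S - T) \<union> (T - S) \<subseteq> {..<n}" using S T unfolding Ix_def by auto
    show "card ((S - T) \<union> (T - S)) \<le> a + b"
      using card_symdiff_le[OF fin] S T unfolding Ix_def by auto
  qed auto
  show ?thesis
  proof (rule polys_cong[OF P])
    fix x assume x: "x \<in> cube n"
    have "f x * g x = (\<Sum>S\<in>Ix n a. c S * walsh S x) * (\<Sum>T\<in>Ix n b. d T * walsh T x)"
      using x c d by simp
    also have "\<dots> = (\<Sum>S\<in>Ix n a. \<Sum>T\<in>Ix n b. (c S * walsh S x) * (d T * walsh T x))"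
      by (rule sum_product)
    also have "\<dots> = (\<Sum>S\<in>Ix n a. \<Sum>T\<in>Ix n b. c S * d T * (walsh S x * walsh T x))"
      by (simp add: ac_simps)
    also have "\<dots> = (\<Sum>S\<in>Ix n a. \<Sum>T\<in>Ix n b. c S * d T * walsh ((S - T) \<union> (T - S)) x)"
    proof (intro sum.cong refl)
      fix S T assume S: "S \<in> Ix n a" and T: "T \<in> Ix n b"
      have fin: "finite S" "finite T" using S T unfolding Ix_def by (auto intro: finite_subset)
      show "c S * d T * (walsh S x * walsh T x) = c S * d T * walsh ((S - T) \<union> (T - S)) x"
        using walsh_mult[OF x fin] by simp
    qed
    finally show "f x * g x = (\<Sum>S\<in>Ix n a. \<Sum>T\<in>Ix n b. c S * d T * walsh ((S - T) \<union> (T - S)) x)" .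
  qed
qed

lemma prod_kernel:
  assumes x: "x \<in> cube n" and y: "y \<in> cube n"
  shows "(\<Sum>S\<in>Pow {..<n}. walsh S y * walsh S x) = (if y = x then 2^n else 0)"
proof -
  have "(\<Sum>S\<in>Pow {..<n}. walsh S y * walsh S x) = (\<Sum>S\<in>Pow {..<n}. (\<Prod>i\<in>S. y i * x i) * (\<Prod>i\<in>{..<n}-S. 1))"
    by (simp add: walsh_def prod.distrib)
  also have "\<dots> = (\<Prod>i<n. y i * x i + 1)"
    by (rule prod_add[symmetric]) simp
  also have "\<dots> = (if y = x then 2^n else 0)"
  proof (cases "y = x")
    case True
    thus ?thesis using cube_sq[OF x] by simp
  next
    case False
    then obtain i where i: "y i \<noteq> x i" by auto
    have "i < n"
    proof (rule ccontr)
      assume "\<not> i < n" thus False using i x y unfolding cube_def by auto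
    qed
    moreover have "y i * x i + 1 = 0"
      using i x y \<open>i < n\<close> unfolding cube_def by force
    ultimately show ?thesis using False by (auto intro: prod_zero)
  qed
  finally show ?thesis .
qed

lemma fourier_inv:
  assumes x: "x \<in> cube n"
  shows "f x = (\<Sum>S\<in>Pow {..<n}. fcoeff n f S * walsh S x)"
proof -
  have "(\<Sum>S\<in>Pow {..<n}. fcoeff n f S * walsh S x)
      = (\<Sum>S\<in>Pow {..<n}. \<Sum>y\<in>cube n. f y * (walsh S y * walsh S x)) / 2^n"
    unfolding fcoeff_def by (simp add: sum_divide_distrib sum_distrib_right mult.assoc)
  also have "(\<Sum>S\<in>Pow {..<n}. \<Sum>y\<in>cube n. f y * (walsh S y * walsh S x))
      = (\<Sum>y\<in>cube n. \<Sum>S\<in>Pow {..<n}. f y * (walsh S y * walsh S x))"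
    by (rule sum.swap)
  also have "\<dots> = (\<Sum>y\<in>cube n. f y * (\<Sum>S\<in>Pow {..<n}. walsh S y * walsh S x))"
    by (simp add: sum_distrib_left)
  also have "\<dots> = (\<Sum>y\<in>cube n. f y * (if y = x then 2^n else 0))"
    using prod_kernel[OF x] by (intro sum.cong) auto
  also have "\<dots> = f x * 2^n" using x by (simp add: if_distrib cong: if_cong)
  finally show ?thesis by simp
qed

lemma deg_le_polys: "deg_le n k f \<Longrightarrow> f \<in> polys n k"
  unfolding polys_def
proof (rule CollectI, rule exI[of _ "fcoeff n f"], intro ballI)
  fix x assume d: "deg_le n k f" and x: "x \<in> cube n"
  have "f x = (\<Sum>S\<in>Pow {..<n}. fcoeff n f S * walsh S x)" by (rule fourier_inv[OF x])
  also have "\<dots> = (\<Sum>S\<in>Ix n k. fcoeff n f S * walsh S x)"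
    by (rule sum.mono_neutral_right) (use d in \<open>auto simp: Ix_def deg_le_def\<close>)
  finally show "f x = (\<Sum>S\<in>Ix n k. fcoeff n f S * walsh S x)" .
qed

lemma fcoeff_walsh:
  assumes "S \<subseteq> {..<n}" "T \<subseteq> {..<n}"
  shows "fcoeff n (walsh S) T = (if S = T then 1 else 0)"
proof -
  have fin: "finite S" "finite T" using assms finite_subset by auto
  have eq: "((S - T) \<union> (T - S) = {}) = (S = T)" by blast
  have U: "(S - T) \<union> (T - S) \<subseteq> {..<n}" using assms by auto
  have 1: "fcoeff n (walsh S) T = (\<Sum>x\<in>cube n. walsh ((S - T) \<union> (T - S)) x) / 2^n"
    unfolding fcoeff_def using walsh_mult[OF _ fin] by simp
  have 2: "(\<Sum>x\<in>cube n. walsh ((S - T) \<union> (T - S)) x) = (if S = T then 2^n else 0)"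
    by (subst sum_walsh[OF U]) (simp only: eq)
  show ?thesis unfolding 1 2 by simp
qed

lemma walsh_tail: "S \<subseteq> {..<n} \<Longrightarrow> k < card S \<Longrightarrow> walsh S \<in> tail_space n k"
  unfolding tail_space_def
proof (intro CollectI allI impI)
  fix T assume S: "S \<subseteq> {..<n}" "k < card S" and T: "T \<subseteq> {..<n}" "card T \<le> k"
  have "S \<noteq> T" using S T by auto
  thus "fcoeff n (walsh S) T = 0" using fcoeff_walsh[OF S(1) T(1)] by simp
qed

lemma tail_orth:
  assumes g: "g \<in> tail_space n k" and h: "h \<in> polys n k"
  shows "(\<Sum>x\<in>cube n. g x * h x) = 0"
proof -
  obtain c where c: "\<forall>x\<in>cube n. h x = (\<Sum>S\<in>Ix n k. c S * walsh S x)"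
    using h unfolding polys_def by auto
  have "(\<Sum>x\<in>cube n. g x * h x) = (\<Sum>x\<in>cube n. \<Sum>S\<in>Ix n k. c S * (g x * walsh S x))"
    using c by (simp add: sum_distrib_left algebra_simps)
  also have "\<dots> = (\<Sum>S\<in>Ix n k. \<Sum>x\<in>cube n. c S * (g x * walsh S x))"
    by (rule sum.swap)
  also have "\<dots> = (\<Sum>S\<in>Ix n k. c S * (\<Sum>x\<in>cube n. g x * walsh S x))"
    by (simp add: sum_distrib_left)
  also have "\<dots> = (\<Sum>S\<in>Ix n k. c S * (2^n * fcoeff n g S))"
    unfolding fcoeff_def by simp
  also have "\<dots> = 0" using g unfolding tail_space_def Ix_def by auto
  finally show ?thesis .
qed

lemma tail_zero: "(\<lambda>_. 0) \<in> tail_space n k"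
  unfolding tail_space_def fcoeff_def by simp

lemma fcoeff_add: "fcoeff n (\<lambda>x. f x + g x) S = fcoeff n f S + fcoeff n g S"
  unfolding fcoeff_def by (simp add: distrib_right sum.distrib add_divide_distrib)

lemma fcoeff_scale: "fcoeff n (\<lambda>x. a * f x) S = a * fcoeff n f S"
  unfolding fcoeff_def by (simp add: sum_distrib_left mult.assoc)

lemma tail_add: "f \<in> tail_space n k \<Longrightarrow> g \<in> tail_space n k \<Longrightarrow> (\<lambda>x. f x + g x) \<in> tail_space n k"
  unfolding tail_space_def by (simp add: fcoeff_add)

lemma tail_scale: "f \<in> tail_space n k \<Longrightarrow> (\<lambda>x. a * f x) \<in> tail_space n k"
  unfolding tail_space_def by (simp add: fcoeff_scale)


definition conjpair :: "ereal \<Rightarrow> ereal \<Rightarrow> bool" where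
  "conjpair a b \<longleftrightarrow> (a = ereal 1 \<and> b = \<infinity>) \<or> (a = \<infinity> \<and> b = ereal 1)
     \<or> (\<exists>r>1. a = ereal r \<and> b = ereal (r / (r - 1)))"

lemma lnorm_ereal: "lnorm n (ereal r) f = ((\<Sum>x\<in>cube n. \<bar>f x\<bar> powr r) / 2^n) powr (1/r)"
  by (simp add: lnorm_def)

lemma lnorm_inf: "lnorm n \<infinity> f = Max ((\<lambda>x. \<bar>f x\<bar>) ` cube n)"
  by (simp add: lnorm_def)

lemma lnorm_1: "lnorm n (ereal 1) f = (\<Sum>x\<in>cube n. \<bar>f x\<bar>) / 2^n"
  by (simp add: lnorm_def sum_nonneg)

lemma lnorm_nonneg: "0 \<le> lnorm n a f"
proof (cases a)
  case PInf
  have "\<bar>f (\<lambda>_. 1)\<bar> \<le> Max ((\<lambda>x. \<bar>f x\<bar>) ` cube n)"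
    by (rule Max_ge) (auto intro: one_in_cube)
  thus ?thesis using PInf by (simp add: lnorm_def)
qed (auto simp: lnorm_def)

lemma lnorm_cong: "(\<And>x. x \<in> cube n \<Longrightarrow> f x = g x) \<Longrightarrow> lnorm n a f = lnorm n a g"
proof -
  assume e: "\<And>x. x \<in> cube n \<Longrightarrow> f x = g x"
  have 1: "(\<Sum>x\<in>cube n. \<bar>f x\<bar> powr r) = (\<Sum>x\<in>cube n. \<bar>g x\<bar> powr r)" for r
    using e by (intro sum.cong) auto
  have 2: "(\<lambda>x. \<bar>f x\<bar>) ` cube n = (\<lambda>x. \<bar>g x\<bar>) ` cube n"
    using e by (intro image_cong) auto
  show ?thesis by (cases a) (simp_all add: lnorm_def 1 2)
qed

lemma lnorm_zero: "(\<And>x. x \<in> cube n \<Longrightarrow> f x = 0) \<Longrightarrow> lnorm n a f = 0"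
proof -
  assume "\<And>x. x \<in> cube n \<Longrightarrow> f x = 0"
  hence "lnorm n a f = lnorm n a (\<lambda>_. 0)" by (rule lnorm_cong)
  also have "\<dots> = 0" by (cases a) (auto simp: lnorm_def)
  finally show ?thesis .
qed

lemma lnorm_eq_zero:
  assumes "0 < r" "lnorm n (ereal r) f = 0" "x \<in> cube n"
  shows "f x = 0"
proof -
  have "(\<Sum>x\<in>cube n. \<bar>f x\<bar> powr r) / 2^n = 0" using assms(2) by (simp add: lnorm_def)
  hence "(\<Sum>x\<in>cube n. \<bar>f x\<bar> powr r) = 0" by simp
  hence "\<bar>f x\<bar> powr r = 0" using assms(3) by (subst (asm) sum_nonneg_eq_0_iff) auto
  thus ?thesis by simp
qed

lemma lnorm_neg: "lnorm n a (\<lambda>x. - f x) = lnorm n a f"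
  by (cases a) (simp_all add: lnorm_def)

lemma lnorm_minus_commute: "lnorm n a (\<lambda>x. f x - g x) = lnorm n a (\<lambda>x. g x - f x)"
  using lnorm_neg[of n a "\<lambda>x. f x - g x"] by simp

lemma lnorm_one: "0 < r \<Longrightarrow> lnorm n (ereal r) (\<lambda>_. 1) = 1"
  by (simp add: lnorm_def card_cube)

lemma powr_m1_mult:
  assumes "0 \<le> (x::real)" "1 < r" shows "x powr (r - 1) * x = x powr r"
proof (cases "x = 0")
  case True thus ?thesis using assms by simp
next
  case False
  hence xp: "0 < x" using assms by simp
  have "x powr (r - 1) * x powr 1 = x powr r" by (simp add: powr_add[symmetric] del: powr_one')
  thus ?thesis using xp abs_of_pos[OF xp] by simp
qed


lemma holder_real:
  assumes r: "1 < r" and s: "s = r / (r - 1)"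
  shows "(\<Sum>x\<in>cube n. \<bar>u x * v x\<bar>) / 2^n \<le> lnorm n (ereal r) u * lnorm n (ereal s) v"
proof -
  have s1: "1 < s" using r s by (simp add: less_divide_eq)
  have rs: "1/r + 1/s = 1"
  proof -
    have "1/r + 1/s = 1/r + (r - 1)/r" using s by simp
    also have "\<dots> = 1" using r by (simp add: add_divide_distrib[symmetric])
    finally show ?thesis .
  qed
  define A where "A = (\<Sum>x\<in>cube n. \<bar>u x\<bar> powr r) / 2^n"
  define B where "B = (\<Sum>x\<in>cube n. \<bar>v x\<bar> powr s) / 2^n"
  define \<alpha> where "\<alpha> = A powr (1/r)"
  define \<beta> where "\<beta> = B powr (1/s)"
  have A0: "0 \<le> A" unfolding A_def by (simp add: sum_nonneg)
  have B0: "0 \<le> B" unfolding B_def by (simp add: sum_nonneg)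
  have ln: "lnorm n (ereal r) u = \<alpha>" "lnorm n (ereal s) v = \<beta>"
    by (simp_all add: lnorm_def \<alpha>_def \<beta>_def A_def B_def)
  show ?thesis
  proof (cases "\<alpha> = 0 \<or> \<beta> = 0")
    case True
    hence "\<forall>x\<in>cube n. u x * v x = 0"
    proof
      assume "\<alpha> = 0"
      thus ?thesis using lnorm_eq_zero[of r n u] ln r by auto
    next
      assume "\<beta> = 0"
      thus ?thesis using lnorm_eq_zero[of s n v] ln s1 by auto
    qed
    hence "(\<Sum>x\<in>cube n. \<bar>u x * v x\<bar>) = 0" by (intro sum.neutral) simp
    thus ?thesis using ln True by auto
  next
    case False
    hence Ap: "0 < A" and Bp: "0 < B" using A0 B0 unfolding \<alpha>_def \<beta>_def by auto
    have ap: "0 < \<alpha>" and bp: "0 < \<beta>" using Ap Bp by (auto simp: \<alpha>_def \<beta>_def)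
    have ar: "\<alpha> powr r = A" unfolding \<alpha>_def using A0 r by (simp add: powr_powr)
    have bs: "\<beta> powr s = B" unfolding \<beta>_def using B0 s1 by (simp add: powr_powr)
    have pt: "\<bar>u x * v x\<bar> / (\<alpha> * \<beta>) \<le> \<bar>u x\<bar> powr r / A / r + \<bar>v x\<bar> powr s / B / s" for x
    proof -
      have "\<bar>u x * v x\<bar> / (\<alpha> * \<beta>) = (\<bar>u x\<bar> / \<alpha>) * (\<bar>v x\<bar> / \<beta>)" by (simp add: abs_mult)
      also have "\<dots> \<le> (\<bar>u x\<bar> / \<alpha>) powr r / r + (\<bar>v x\<bar> / \<beta>) powr s / s"
        by (rule Youngs_inequality) (use r s1 rs ap bp in auto)
      also have "(\<bar>u x\<bar> / \<alpha>) powr r = \<bar>u x\<bar> powr r / A"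
        using ap by (simp add: powr_divide ar)
      also have "(\<bar>v x\<bar> / \<beta>) powr s = \<bar>v x\<bar> powr s / B"
        using bp by (simp add: powr_divide bs)
      finally show ?thesis by simp
    qed
    have "(\<Sum>x\<in>cube n. \<bar>u x * v x\<bar>) / (\<alpha> * \<beta>) = (\<Sum>x\<in>cube n. \<bar>u x * v x\<bar> / (\<alpha> * \<beta>))"
      by (simp add: sum_divide_distrib)
    also have "\<dots> \<le> (\<Sum>x\<in>cube n. \<bar>u x\<bar> powr r / A / r + \<bar>v x\<bar> powr s / B / s)"
      by (rule sum_mono) (rule pt)
    also have "\<dots> = (\<Sum>x\<in>cube n. \<bar>u x\<bar> powr r) / A / r + (\<Sum>x\<in>cube n. \<bar>v x\<bar> powr s) / B / s"
      by (simp add: sum.distrib sum_divide_distrib)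
    also have "\<dots> = 2^n / r + 2^n / s"
    proof -
      have SA: "(\<Sum>x\<in>cube n. \<bar>u x\<bar> powr r) = A * 2^n" by (simp add: A_def)
      have SB: "(\<Sum>x\<in>cube n. \<bar>v x\<bar> powr s) = B * 2^n" by (simp add: B_def)
      show ?thesis unfolding SA SB using Ap Bp by simp
    qed
    also have "\<dots> = 2^n * (1/r + 1/s)" by (simp add: distrib_left)
    also have "\<dots> = 2^n" using rs by simp
    finally have "(\<Sum>x\<in>cube n. \<bar>u x * v x\<bar>) / (\<alpha> * \<beta>) \<le> 2^n" .
    hence "(\<Sum>x\<in>cube n. \<bar>u x * v x\<bar>) \<le> 2^n * (\<alpha> * \<beta>)"
      using ap bp by (simp add: divide_le_eq mult.commute)
    thus ?thesis using ln by (simp add: divide_le_eq mult.commute)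
  qed
qed

lemma holder_1inf:
  "(\<Sum>x\<in>cube n. \<bar>u x * v x\<bar>) / 2^n \<le> lnorm n (ereal 1) u * lnorm n \<infinity> v"
proof -
  define M where "M = Max ((\<lambda>x. \<bar>v x\<bar>) ` cube n)"
  have vM: "x \<in> cube n \<Longrightarrow> \<bar>v x\<bar> \<le> M" for x unfolding M_def by (rule Max_ge) auto
  have "(\<Sum>x\<in>cube n. \<bar>u x * v x\<bar>) \<le> (\<Sum>x\<in>cube n. \<bar>u x\<bar> * M)"
    by (rule sum_mono) (simp add: abs_mult mult_left_mono vM)
  also have "\<dots> = (\<Sum>x\<in>cube n. \<bar>u x\<bar>) * M" by (simp add: sum_distrib_right)
  finally show ?thesis by (simp add: lnorm_1 lnorm_inf M_def[symmetric] divide_right_mono)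
qed

lemma holder:
  assumes "conjpair a b"
  shows "(\<Sum>x\<in>cube n. \<bar>u x * v x\<bar>) / 2^n \<le> lnorm n a u * lnorm n b v"
  using assms unfolding conjpair_def
proof (elim disjE conjE exE)
  assume "a = ereal 1" "b = \<infinity>" thus ?thesis using holder_1inf by simp
next
  assume "a = \<infinity>" "b = ereal 1" thus ?thesis using holder_1inf[where n=n and u=v and v=u]
    by (simp add: mult.commute)
next
  fix r assume "1 < r" "a = ereal r" "b = ereal (r / (r - 1))"
  thus ?thesis using holder_real by simp
qed

lemma holder':
  assumes "conjpair a b"
  shows "(\<Sum>x\<in>cube n. u x * v x) / 2^n \<le> lnorm n a u * lnorm n b v"
proof -
  have "(\<Sum>x\<in>cube n. u x * v x) \<le> (\<Sum>x\<in>cube n. \<bar>u x * v x\<bar>)" by (rule sum_mono) simp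
  hence "(\<Sum>x\<in>cube n. u x * v x) / 2^n \<le> (\<Sum>x\<in>cube n. \<bar>u x * v x\<bar>) / 2^n"
    by (simp add: divide_right_mono)
  thus ?thesis using holder[OF assms, where n=n and u=u and v=v] by linarith
qed


lemma norming_real:
  assumes r: "1 < r" and s: "s = r / (r - 1)"
  shows "\<exists>w. lnorm n (ereal s) w \<le> 1 \<and> (\<Sum>x\<in>cube n. w x * u x) / 2^n = lnorm n (ereal r) u"
proof -
  have s1: "1 < s" using r s by (simp add: less_divide_eq)
  have rs: "(r - 1) * s = r" using r s by (simp add: field_simps)
  define A where "A = (\<Sum>x\<in>cube n. \<bar>u x\<bar> powr r) / 2^n"
  define \<alpha> where "\<alpha> = A powr (1/r)"
  have A0: "0 \<le> A" unfolding A_def by (simp add: sum_nonneg)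
  have ln: "lnorm n (ereal r) u = \<alpha>" by (simp add: lnorm_def \<alpha>_def A_def)
  show ?thesis
  proof (cases "\<alpha> = 0")
    case True
    have "lnorm n (ereal s) (\<lambda>_. 0) = 0" by (rule lnorm_zero) simp
    thus ?thesis using ln True by (intro exI[of _ "\<lambda>_. 0"]) simp
  next
    case False
    have Ap: "0 < A" using False A0 unfolding \<alpha>_def by auto
    have ap: "0 < \<alpha>" using Ap by (simp add: \<alpha>_def)
    have ar: "\<alpha> powr r = A" unfolding \<alpha>_def using A0 r by (simp add: powr_powr)
    define w where "w x = sgn (u x) * \<bar>u x\<bar> powr (r - 1) / \<alpha> powr (r - 1)" for x
    have wu: "w x * u x = \<bar>u x\<bar> powr r / \<alpha> powr (r - 1)" for x
    proof -
      have "w x * u x = \<bar>u x\<bar> powr (r - 1) * \<bar>u x\<bar> / \<alpha> powr (r - 1)"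
        unfolding w_def by (simp add: sgn_mult_abs abs_mult_sgn mult.commute mult.left_commute sgn_if)
      thus ?thesis using powr_m1_mult[of "\<bar>u x\<bar>" r] r by simp
    qed
    have "(\<Sum>x\<in>cube n. w x * u x) / 2^n = A / \<alpha> powr (r - 1)"
      unfolding wu A_def by (simp add: sum_divide_distrib[symmetric])
    also have "\<dots> = \<alpha>" using ap by (simp add: ar[symmetric] powr_diff)
    finally have 1: "(\<Sum>x\<in>cube n. w x * u x) / 2^n = lnorm n (ereal r) u" using ln by simp
    have ws: "\<bar>w x\<bar> powr s = \<bar>u x\<bar> powr r / A" for x
    proof -
      have "\<bar>w x\<bar> = \<bar>u x\<bar> powr (r - 1) / \<alpha> powr (r - 1)"
        unfolding w_def by (simp add: abs_mult sgn_if)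
      hence "\<bar>w x\<bar> powr s = (\<bar>u x\<bar> powr (r - 1)) powr s / (\<alpha> powr (r - 1)) powr s"
        by (simp add: powr_divide)
      also have "\<dots> = \<bar>u x\<bar> powr r / A" using ap by (simp add: powr_powr rs ar)
      finally show ?thesis .
    qed
    have SA: "(\<Sum>x\<in>cube n. \<bar>u x\<bar> powr r) = A * 2^n" by (simp add: A_def)
    have "(\<Sum>x\<in>cube n. \<bar>w x\<bar> powr s) = (\<Sum>x\<in>cube n. \<bar>u x\<bar> powr r) / A"
      by (simp add: ws sum_divide_distrib)
    hence E1: "(\<Sum>x\<in>cube n. \<bar>w x\<bar> powr s) / 2^n = 1" using Ap SA by simp
    have "lnorm n (ereal s) w = 1" unfolding lnorm_ereal E1 by simp
    thus ?thesis using 1 by (intro exI[of _ w] conjI) auto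
  qed
qed

lemma norming_1:
  "\<exists>w. lnorm n \<infinity> w \<le> 1 \<and> (\<Sum>x\<in>cube n. w x * u x) / 2^n = lnorm n (ereal 1) u"
proof (rule exI[of _ "\<lambda>x. sgn (u x)"], intro conjI)
  show "lnorm n \<infinity> (\<lambda>x. sgn (u x)) \<le> 1"
    unfolding lnorm_inf by (subst Max_le_iff) (auto simp: sgn_if)
  have "(\<Sum>x\<in>cube n. sgn (u x) * u x) = (\<Sum>x\<in>cube n. \<bar>u x\<bar>)"
    by (rule sum.cong) (auto simp: sgn_if)
  thus "(\<Sum>x\<in>cube n. sgn (u x) * u x) / 2^n = lnorm n (ereal 1) u" by (simp add: lnorm_1)
qed

lemma norming_inf:
  "\<exists>w. lnorm n (ereal 1) w \<le> 1 \<and> (\<Sum>x\<in>cube n. w x * u x) / 2^n = lnorm n \<infinity> u"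
proof -
  have "Max ((\<lambda>x. \<bar>u x\<bar>) ` cube n) \<in> (\<lambda>x. \<bar>u x\<bar>) ` cube n" by (rule Max_in) auto
  then obtain x0 where x0': "x0 \<in> cube n" "\<bar>u x0\<bar> = Max ((\<lambda>x. \<bar>u x\<bar>) ` cube n)"
    by (metis (no_types, lifting) imageE)
  have x0: "x0 \<in> cube n" "\<bar>u x0\<bar> = lnorm n \<infinity> u" using x0' by (simp_all add: lnorm_inf)
  define w where "w x = (if x = x0 then 2^n * sgn (u x0) else 0)" for x
  have "lnorm n (ereal 1) w = \<bar>sgn (u x0)\<bar>"
    unfolding lnorm_1 w_def using x0 by (simp add: abs_mult if_distrib cong: if_cong)
  hence "lnorm n (ereal 1) w \<le> 1" by (simp add: sgn_if)
  moreover have "(\<Sum>x\<in>cube n. w x * u x) / 2^n = lnorm n \<infinity> u"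
  proof -
    have "(\<Sum>x\<in>cube n. w x * u x) = (\<Sum>x\<in>cube n. if x = x0 then 2^n * sgn (u x0) * u x0 else 0)"
      by (rule sum.cong) (auto simp: w_def)
    also have "\<dots> = 2^n * sgn (u x0) * u x0" using x0(1) by simp
    also have "sgn (u x0) * u x0 = \<bar>u x0\<bar>" by (simp add: abs_if sgn_if)
    hence "2^n * sgn (u x0) * u x0 = 2^n * \<bar>u x0\<bar>" by (simp add: mult.assoc)
    finally show ?thesis using x0(2) by simp
  qed
  ultimately show ?thesis by blast
qed

lemma norming:
  assumes "conjpair a b"
  shows "\<exists>w. lnorm n b w \<le> 1 \<and> (\<Sum>x\<in>cube n. w x * u x) / 2^n = lnorm n a u"
  using assms unfolding conjpair_def
  by (elim disjE conjE exE) (use norming_1 norming_inf norming_real in auto)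

lemma minkowski:
  assumes "conjpair a b"
  shows "lnorm n a (\<lambda>x. u x + v x) \<le> lnorm n a u + lnorm n a v"
proof -
  obtain w where w: "lnorm n b w \<le> 1" "(\<Sum>x\<in>cube n. w x * (u x + v x)) / 2^n = lnorm n a (\<lambda>x. u x + v x)"
    using norming[OF assms, of n "\<lambda>x. u x + v x"] by auto
  have "lnorm n a (\<lambda>x. u x + v x) = (\<Sum>x\<in>cube n. u x * w x) / 2^n + (\<Sum>x\<in>cube n. v x * w x) / 2^n"
    using w(2) by (simp add: algebra_simps sum.distrib add_divide_distrib)
  also have "\<dots> \<le> lnorm n a u * lnorm n b w + lnorm n a v * lnorm n b w"
    by (intro add_mono holder'[OF assms])
  also have "\<dots> \<le> lnorm n a u + lnorm n a v"
    using w(1) lnorm_nonneg[of n a u] lnorm_nonneg[of n a v]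
    by (intro add_mono) (auto intro: mult_left_le)
  finally show ?thesis .
qed

lemma homog:
  assumes "conjpair a b" "0 \<le> c"
  shows "lnorm n a (\<lambda>x. c * u x) = c * lnorm n a u"
proof (rule antisym)
  obtain w where w: "lnorm n b w \<le> 1" "(\<Sum>x\<in>cube n. w x * (c * u x)) / 2^n = lnorm n a (\<lambda>x. c * u x)"
    using norming[OF assms(1), of n "\<lambda>x. c * u x"] by auto
  have "lnorm n a (\<lambda>x. c * u x) = c * ((\<Sum>x\<in>cube n. u x * w x) / 2^n)"
    using w(2) by (simp add: algebra_simps sum_distrib_left)
  also have "\<dots> \<le> c * (lnorm n a u * lnorm n b w)"
    by (intro mult_left_mono holder'[OF assms(1)] assms(2))
  also have "\<dots> \<le> c * lnorm n a u"
    using w(1) lnorm_nonneg[of n a u] assms(2)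
    by (intro mult_left_mono) (auto intro: mult_left_le)
  finally show "lnorm n a (\<lambda>x. c * u x) \<le> c * lnorm n a u" .
next
  obtain w where w: "lnorm n b w \<le> 1" "(\<Sum>x\<in>cube n. w x * u x) / 2^n = lnorm n a u"
    using norming[OF assms(1), of n u] by auto
  have "c * lnorm n a u = (\<Sum>x\<in>cube n. (c * u x) * w x) / 2^n"
    using w(2)[symmetric] by (simp add: algebra_simps sum_distrib_left)
  also have "\<dots> \<le> lnorm n a (\<lambda>x. c * u x) * lnorm n b w"
    by (rule holder'[OF assms(1)])
  also have "\<dots> \<le> lnorm n a (\<lambda>x. c * u x)"
    using w(1) lnorm_nonneg[of n a "\<lambda>x. c * u x"] by (auto intro: mult_left_le)
  finally show "c * lnorm n a u \<le> lnorm n a (\<lambda>x. c * u x)" .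
qed

lemma conjpair_sym: "conjpair a b \<Longrightarrow> conjpair b a"
  unfolding conjpair_def
proof (elim disjE conjE exE)
  fix r assume r: "1 < r" "a = ereal r" "b = ereal (r / (r - 1))"
  have "1 < r / (r - 1)" using r by (simp add: field_simps)
  moreover have "r / (r - 1) / (r / (r - 1) - 1) = r" using r by (simp add: field_simps)
  ultimately show "(b = ereal 1 \<and> a = \<infinity>) \<or> (b = \<infinity> \<and> a = ereal 1) \<or> (\<exists>r>1. b = ereal r \<and> a = ereal (r / (r - 1)))"
    using r by metis
qed auto

lemma conjpair_conj_exp: "1 \<le> p \<Longrightarrow> conjpair (ereal p) (conj_exp p)"
  unfolding conjpair_def conj_exp_def by auto

lemma lnorm_mono:
  assumes a: "1 \<le> a" and ab: "a \<le> b"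
  shows "lnorm n (ereal a) u \<le> lnorm n (ereal b) u"
proof (cases "a = b")
  case False
  hence ab': "a < b" using ab by simp
  define r where "r = b / a"
  have r1: "1 < r" using a ab' by (simp add: r_def field_simps)
  define v where "v x = \<bar>u x\<bar> powr a" for x
  have "(\<Sum>x\<in>cube n. \<bar>v x * 1\<bar>) / 2^n \<le> lnorm n (ereal r) v * lnorm n (ereal (r / (r - 1))) (\<lambda>_. 1)"
    by (rule holder_real[OF r1 refl])
  also have "lnorm n (ereal (r / (r - 1))) (\<lambda>_. 1) = 1"
    using r1 by (intro lnorm_one) (simp add: field_simps)
  also have "lnorm n (ereal r) v = ((\<Sum>x\<in>cube n. \<bar>u x\<bar> powr b) / 2^n) powr (a / b)"
    unfolding lnorm_ereal v_def using a ab' by (simp add: powr_powr r_def)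
  finally have 1: "(\<Sum>x\<in>cube n. \<bar>u x\<bar> powr a) / 2^n \<le> ((\<Sum>x\<in>cube n. \<bar>u x\<bar> powr b) / 2^n) powr (a / b)"
    by (simp add: v_def)
  have "lnorm n (ereal a) u = ((\<Sum>x\<in>cube n. \<bar>u x\<bar> powr a) / 2^n) powr (1/a)" by (rule lnorm_ereal)
  also have "\<dots> \<le> (((\<Sum>x\<in>cube n. \<bar>u x\<bar> powr b) / 2^n) powr (a / b)) powr (1/a)"
    by (rule powr_mono2) (use 1 a in \<open>simp_all add: sum_nonneg\<close>)
  also have "\<dots> = lnorm n (ereal b) u"
    using a ab' by (simp add: lnorm_ereal powr_powr)
  finally show ?thesis .
qed simp


type_synonym fn = "(nat \<Rightarrow> real) \<Rightarrow> real"

definition subsp :: "fn set \<Rightarrow> bool" where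
  "subsp W \<longleftrightarrow> (\<lambda>_. 0) \<in> W \<and> (\<forall>u\<in>W. \<forall>v\<in>W. (\<lambda>x. u x + v x) \<in> W) \<and> (\<forall>u\<in>W. \<forall>c. (\<lambda>x. c * u x) \<in> W)"

definition linon :: "(fn \<Rightarrow> real) \<Rightarrow> fn set \<Rightarrow> bool" where
  "linon \<phi> W \<longleftrightarrow> (\<forall>u\<in>W. \<forall>v\<in>W. \<phi> (\<lambda>x. u x + v x) = \<phi> u + \<phi> v) \<and> (\<forall>u\<in>W. \<forall>c. \<phi> (\<lambda>x. c * u x) = c * \<phi> u)"

definition sublin :: "(fn \<Rightarrow> real) \<Rightarrow> bool" where
  "sublin S \<longleftrightarrow> (\<forall>u v. S (\<lambda>x. u x + v x) \<le> S u + S v) \<and> (\<forall>u c. 0 \<le> c \<longrightarrow> S (\<lambda>x. c * u x) = c * S u)"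

definition extsp :: "fn set \<Rightarrow> fn \<Rightarrow> fn set" where
  "extsp W v = {u. \<exists>w\<in>W. \<exists>t. u = (\<lambda>x. w x + t * v x)}"

lemma subsp_add: "subsp W \<Longrightarrow> u \<in> W \<Longrightarrow> v \<in> W \<Longrightarrow> (\<lambda>x. u x + v x) \<in> W"
  unfolding subsp_def by blast
lemma subsp_scale: "subsp W \<Longrightarrow> u \<in> W \<Longrightarrow> (\<lambda>x. c * u x) \<in> W"
  unfolding subsp_def by blast
lemma subsp_zero: "subsp W \<Longrightarrow> (\<lambda>_. 0) \<in> W"
  unfolding subsp_def by blast
lemma linon_add: "linon \<phi> W \<Longrightarrow> u \<in> W \<Longrightarrow> v \<in> W \<Longrightarrow> \<phi> (\<lambda>x. u x + v x) = \<phi> u + \<phi> v"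
  unfolding linon_def by blast
lemma linon_scale: "linon \<phi> W \<Longrightarrow> u \<in> W \<Longrightarrow> \<phi> (\<lambda>x. c * u x) = c * \<phi> u"
  unfolding linon_def by blast

lemma linon_zero: "subsp W \<Longrightarrow> linon \<phi> W \<Longrightarrow> \<phi> (\<lambda>_. 0) = 0"
  using linon_scale[of \<phi> W "\<lambda>_. 0" 0] subsp_zero[of W] by simp

lemma subsp_ext: "subsp W \<Longrightarrow> subsp (extsp W v)"
  unfolding subsp_def extsp_def
proof (intro conjI ballI allI; elim conjE)
  assume W: "(\<lambda>_. 0) \<in> W" "\<forall>u\<in>W. \<forall>v\<in>W. (\<lambda>x. u x + v x) \<in> W" "\<forall>u\<in>W. \<forall>c. (\<lambda>x. c * u x) \<in> W"
  show "(\<lambda>_. 0) \<in> {u. \<exists>w\<in>W. \<exists>t. u = (\<lambda>x. w x + t * v x)}"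
    using W(1) by (auto intro!: bexI[of _ "\<lambda>_. 0"] exI[of _ 0])
  fix u1 u2 assume "u1 \<in> {u. \<exists>w\<in>W. \<exists>t. u = (\<lambda>x. w x + t * v x)}" "u2 \<in> {u. \<exists>w\<in>W. \<exists>t. u = (\<lambda>x. w x + t * v x)}"
  then obtain w1 t1 w2 t2 where "w1 \<in> W" "w2 \<in> W" "u1 = (\<lambda>x. w1 x + t1 * v x)" "u2 = (\<lambda>x. w2 x + t2 * v x)" by auto
  thus "(\<lambda>x. u1 x + u2 x) \<in> {u. \<exists>w\<in>W. \<exists>t. u = (\<lambda>x. w x + t * v x)}"
    using W(2) by (auto intro!: bexI[of _ "\<lambda>x. w1 x + w2 x"] exI[of _ "t1 + t2"] simp: algebra_simps)
next
  fix u c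
  assume W: "(\<lambda>_. 0) \<in> W" "\<forall>u\<in>W. \<forall>v\<in>W. (\<lambda>x. u x + v x) \<in> W" "\<forall>u\<in>W. \<forall>c. (\<lambda>x. c * u x) \<in> W"
    and "u \<in> {u. \<exists>w\<in>W. \<exists>t. u = (\<lambda>x. w x + t * v x)}"
  then obtain w t where "w \<in> W" "u = (\<lambda>x. w x + t * v x)" by auto
  thus "(\<lambda>x. c * u x) \<in> {u. \<exists>w\<in>W. \<exists>t. u = (\<lambda>x. w x + t * v x)}"
    using W(3) by (auto intro!: bexI[of _ "\<lambda>x. c * w x"] exI[of _ "c * t"] simp: algebra_simps)
qed

lemma subset_ext: "subsp W \<Longrightarrow> W \<subseteq> extsp W v"
  unfolding extsp_def by (auto intro!: exI[of _ 0])

lemma in_ext: "subsp W \<Longrightarrow> v \<in> extsp W v"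
  unfolding extsp_def by (auto intro!: bexI[of _ "\<lambda>_. 0"] exI[of _ 1] subsp_zero)

lemma hb_step:
  assumes W: "subsp W" and \<phi>: "linon \<phi> W" and S: "sublin S" and bd: "\<forall>w\<in>W. \<phi> w \<le> S w"
    and v: "v \<notin> W"
    and c1: "\<forall>w\<in>W. \<phi> w - S (\<lambda>x. w x - v x) \<le> c" and c2: "\<forall>w\<in>W. c \<le> S (\<lambda>x. w x + v x) - \<phi> w"
  shows "\<exists>\<phi>'. linon \<phi>' (extsp W v) \<and> (\<forall>w\<in>W. \<phi>' w = \<phi> w) \<and> \<phi>' v = c \<and> (\<forall>u\<in>extsp W v. \<phi>' u \<le> S u)"
proof -
  have uniq: "t = t' \<and> w = w'" if "w \<in> W" "w' \<in> W" "(\<lambda>x. w x + t * v x) = (\<lambda>x. w' x + t' * v x)" for w w' t t'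
  proof -
    have tt: "t = t'"
    proof (rule ccontr)
      assume "t \<noteq> t'"
      have "(\<lambda>x. (1 / (t' - t)) * (w x + (-1) * w' x)) \<in> W"
        using that W by (intro subsp_scale subsp_add) auto
      moreover have "(\<lambda>x. (1 / (t' - t)) * (w x + (-1) * w' x)) = v"
      proof
        fix x
        have "w x + t * v x = w' x + t' * v x" using fun_cong[OF that(3), of x] by simp
        thus "(1 / (t' - t)) * (w x + (-1) * w' x) = v x" using \<open>t \<noteq> t'\<close>
          by (simp add: field_simps)
      qed
      ultimately show False using v by simp
    qed
    moreover have "w = w'"
    proof
      fix x show "w x = w' x" using fun_cong[OF that(3), of x] tt by simp
    qed
    ultimately show ?thesis by simp
  qed
  define \<phi>' where "\<phi>' u = (THE a. \<exists>w\<in>W. \<exists>t. u = (\<lambda>x. w x + t * v x) \<and> a = \<phi> w + t * c)" for u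
  have key: "\<phi>' (\<lambda>x. w x + t * v x) = \<phi> w + t * c" if "w \<in> W" for w t
    unfolding \<phi>'_def
  proof (rule the_equality)
    show "\<exists>w'\<in>W. \<exists>t'. (\<lambda>x. w x + t * v x) = (\<lambda>x. w' x + t' * v x) \<and> \<phi> w + t * c = \<phi> w' + t' * c"
      using that by blast
  next
    fix a assume "\<exists>w'\<in>W. \<exists>t'. (\<lambda>x. w x + t * v x) = (\<lambda>x. w' x + t' * v x) \<and> a = \<phi> w' + t' * c"
    then obtain w' t' where "w' \<in> W" "(\<lambda>x. w x + t * v x) = (\<lambda>x. w' x + t' * v x)" "a = \<phi> w' + t' * c" by blast
    thus "a = \<phi> w + t * c" using uniq[OF that] by auto
  qed
  have z: "\<phi> (\<lambda>_. 0) = 0" by (rule linon_zero[OF W \<phi>])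
  have ext1: "\<phi>' w = \<phi> w" if "w \<in> W" for w
    using key[OF that, of 0] by simp
  have ext2: "\<phi>' v = c"
    using key[OF subsp_zero[OF W], of 1] z by simp
  have lin: "linon \<phi>' (extsp W v)"
    unfolding linon_def extsp_def
  proof (intro conjI ballI allI)
    fix u1 u2 assume "u1 \<in> {u. \<exists>w\<in>W. \<exists>t. u = (\<lambda>x. w x + t * v x)}" "u2 \<in> {u. \<exists>w\<in>W. \<exists>t. u = (\<lambda>x. w x + t * v x)}"
    then obtain w1 t1 w2 t2 where w: "w1 \<in> W" "w2 \<in> W" "u1 = (\<lambda>x. w1 x + t1 * v x)" "u2 = (\<lambda>x. w2 x + t2 * v x)" by auto
    have "(\<lambda>x. u1 x + u2 x) = (\<lambda>x. (w1 x + w2 x) + (t1 + t2) * v x)" using w by (auto simp: algebra_simps)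
    hence "\<phi>' (\<lambda>x. u1 x + u2 x) = \<phi> (\<lambda>x. w1 x + w2 x) + (t1 + t2) * c"
      using key[OF subsp_add[OF W w(1,2)]] by simp
    also have "\<dots> = \<phi>' u1 + \<phi>' u2" using w key linon_add[OF \<phi> w(1,2)] by (simp add: algebra_simps)
    finally show "\<phi>' (\<lambda>x. u1 x + u2 x) = \<phi>' u1 + \<phi>' u2" .
  next
    fix u a assume "u \<in> {u. \<exists>w\<in>W. \<exists>t. u = (\<lambda>x. w x + t * v x)}"
    then obtain w t where w: "w \<in> W" "u = (\<lambda>x. w x + t * v x)" by auto
    have "(\<lambda>x. a * u x) = (\<lambda>x. a * w x + (a * t) * v x)" using w by (auto simp: algebra_simps)
    hence "\<phi>' (\<lambda>x. a * u x) = \<phi> (\<lambda>x. a * w x) + (a * t) * c"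
      using key[OF subsp_scale[OF W w(1)]] by simp
    also have "\<dots> = a * \<phi>' u" using w key linon_scale[OF \<phi> w(1)] by (simp add: algebra_simps)
    finally show "\<phi>' (\<lambda>x. a * u x) = a * \<phi>' u" .
  qed
  have Shom: "S (\<lambda>x. a * u x) = a * S u" if "0 \<le> a" for a u
    using S that unfolding sublin_def by blast
  have bound: "\<phi>' u \<le> S u" if "u \<in> extsp W v" for u
  proof -
    from that obtain w t where w: "w \<in> W" "u = (\<lambda>x. w x + t * v x)" unfolding extsp_def by blast
    have "\<phi> w + t * c \<le> S (\<lambda>x. w x + t * v x)"
    proof (cases "t = 0")
      case True thus ?thesis using bd w by simp
    next
      case False
      show ?thesis
      proof (cases "t > 0")
        case True
        have w': "(\<lambda>x. (1/t) * w x) \<in> W" by (rule subsp_scale[OF W w(1)])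
        have "c \<le> S (\<lambda>x. (1/t) * w x + v x) - \<phi> (\<lambda>x. (1/t) * w x)" using bspec[OF c2 w'] by simp
        hence "t * c \<le> t * S (\<lambda>x. (1/t) * w x + v x) - t * \<phi> (\<lambda>x. (1/t) * w x)"
          using True by (simp add: right_diff_distrib[symmetric] mult_left_mono)
        also have "t * \<phi> (\<lambda>x. (1/t) * w x) = \<phi> w"
        proof -
          have "\<phi> (\<lambda>x. (1/t) * w x) = (1/t) * \<phi> w" by (rule linon_scale[OF \<phi> w(1)])
          thus ?thesis using True by simp
        qed
        also have "t * S (\<lambda>x. (1/t) * w x + v x) = S (\<lambda>x. t * ((1/t) * w x + v x))"
          using Shom[of t] True by simp
        also have "(\<lambda>x. t * ((1/t) * w x + v x)) = (\<lambda>x. w x + t * v x)"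
          using True by (simp add: algebra_simps)
        finally show ?thesis by simp
      next
        case False
        hence tn: "0 < - t" using \<open>t \<noteq> 0\<close> by simp
        define s where "s = - t"
        have sp: "0 < s" using tn s_def by simp
        have w': "(\<lambda>x. (1/s) * w x) \<in> W" by (rule subsp_scale[OF W w(1)])
        have "\<phi> (\<lambda>x. (1/s) * w x) - S (\<lambda>x. (1/s) * w x - v x) \<le> c" using bspec[OF c1 w'] by simp
        hence "s * \<phi> (\<lambda>x. (1/s) * w x) - s * S (\<lambda>x. (1/s) * w x - v x) \<le> s * c"
          using sp by (simp add: right_diff_distrib[symmetric] mult_left_mono)
        also have "s * \<phi> (\<lambda>x. (1/s) * w x) = \<phi> w"
        proof -
          have "\<phi> (\<lambda>x. (1/s) * w x) = (1/s) * \<phi> w" by (rule linon_scale[OF \<phi> w(1)])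
          thus ?thesis using sp by simp
        qed
        also have "s * S (\<lambda>x. (1/s) * w x - v x) = S (\<lambda>x. s * ((1/s) * w x - v x))"
          using Shom[of s] sp by simp
        also have "(\<lambda>x. s * ((1/s) * w x - v x)) = (\<lambda>x. w x + t * v x)"
          using sp by (simp add: algebra_simps s_def)
        finally show ?thesis by (simp add: s_def)
      qed
    qed
    thus ?thesis using w key by simp
  qed
  show ?thesis using lin ext1 ext2 bound by blast
qed

lemma hb_ext:
  assumes W: "subsp W" and \<phi>: "linon \<phi> W" and S: "sublin S" and bd: "\<forall>w\<in>W. \<phi> w \<le> S w"
  shows "\<exists>W' \<phi>'. subsp W' \<and> W \<subseteq> W' \<and> v \<in> W' \<and> linon \<phi>' W' \<and> (\<forall>w\<in>W. \<phi>' w = \<phi> w) \<and> (\<forall>u\<in>W'. \<phi>' u \<le> S u)"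
proof (cases "v \<in> W")
  case True thus ?thesis using assms by blast
next
  case False
  have tri: "S (\<lambda>x. u x + w x) \<le> S u + S w" for u w using S unfolding sublin_def by blast
  have key: "\<phi> w1 - S (\<lambda>x. w1 x - v x) \<le> S (\<lambda>x. w2 x + v x) - \<phi> w2" if "w1 \<in> W" "w2 \<in> W" for w1 w2
  proof -
    have "\<phi> w1 + \<phi> w2 = \<phi> (\<lambda>x. w1 x + w2 x)" using linon_add[OF \<phi> that] by simp
    also have "\<dots> \<le> S (\<lambda>x. w1 x + w2 x)" using bd subsp_add[OF W that] by blast
    also have "(\<lambda>x. w1 x + w2 x) = (\<lambda>x. (w1 x - v x) + (w2 x + v x))" by simp
    also have "S \<dots> \<le> S (\<lambda>x. w1 x - v x) + S (\<lambda>x. w2 x + v x)" by (rule tri)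
    finally show ?thesis by simp
  qed
  define c where "c = (SUP w\<in>W. \<phi> w - S (\<lambda>x. w x - v x))"
  have ne: "W \<noteq> {}" using subsp_zero[OF W] by blast
  have bdd: "bdd_above ((\<lambda>w. \<phi> w - S (\<lambda>x. w x - v x)) ` W)"
    using key[OF _ subsp_zero[OF W]] by (intro bdd_aboveI2) blast
  have c1: "\<forall>w\<in>W. \<phi> w - S (\<lambda>x. w x - v x) \<le> c"
    unfolding c_def using bdd by (auto intro: cSUP_upper)
  have c2: "\<forall>w\<in>W. c \<le> S (\<lambda>x. w x + v x) - \<phi> w"
    unfolding c_def using key ne by (auto intro!: cSUP_least)
  obtain \<phi>' where "linon \<phi>' (extsp W v)" "\<forall>w\<in>W. \<phi>' w = \<phi> w" "\<forall>u\<in>extsp W v. \<phi>' u \<le> S u"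
    using hb_step[OF W \<phi> S bd False c1 c2] by blast
  thus ?thesis using subsp_ext[OF W] subset_ext[OF W] in_ext[OF W] by blast
qed

lemma hb_finite:
  assumes B: "finite B" and W: "subsp W" and \<phi>: "linon \<phi> W" and S: "sublin S" and bd: "\<forall>w\<in>W. \<phi> w \<le> S w"
  shows "\<exists>W' \<phi>'. subsp W' \<and> W \<subseteq> W' \<and> B \<subseteq> W' \<and> linon \<phi>' W' \<and> (\<forall>w\<in>W. \<phi>' w = \<phi> w) \<and> (\<forall>u\<in>W'. \<phi>' u \<le> S u)"
  using B
proof (induction B rule: finite_induct)
  case empty thus ?case using assms by blast
next
  case (insert b B)
  then obtain W1 \<phi>1 where 1: "subsp W1" "W \<subseteq> W1" "B \<subseteq> W1" "linon \<phi>1 W1" "\<forall>w\<in>W. \<phi>1 w = \<phi> w" "\<forall>u\<in>W1. \<phi>1 u \<le> S u"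
    by blast
  obtain W2 \<phi>2 where 2: "subsp W2" "W1 \<subseteq> W2" "b \<in> W2" "linon \<phi>2 W2" "\<forall>w\<in>W1. \<phi>2 w = \<phi>1 w" "\<forall>u\<in>W2. \<phi>2 u \<le> S u"
    using hb_ext[OF 1(1) 1(4) S 1(6)] by blast
  have i1: "insert b B \<subseteq> W2" using 1(3) 2(2,3) by blast
  have i2: "\<forall>w\<in>W. \<phi>2 w = \<phi> w" using 1(2,5) 2(5) by auto
  have i3: "W \<subseteq> W2" using 1(2) 2(2) by blast
  show ?case using i1 i2 i3 2(1,4,6) by blast
qed

lemma subsp_sum:
  assumes W: "subsp W" and A: "finite A" and F: "\<And>i. i \<in> A \<Longrightarrow> F i \<in> W"
  shows "(\<lambda>x. \<Sum>i\<in>A. F i x) \<in> W"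
  using A F
proof (induction A rule: finite_induct)
  case empty thus ?case using subsp_zero[OF W] by simp
next
  case (insert a A)
  thus ?case using subsp_add[OF W, of "F a" "\<lambda>x. \<Sum>i\<in>A. F i x"] by simp
qed

lemma linon_sum:
  assumes W: "subsp W" and \<phi>: "linon \<phi> W" and A: "finite A" and F: "\<And>i. i \<in> A \<Longrightarrow> F i \<in> W"
  shows "\<phi> (\<lambda>x. \<Sum>i\<in>A. F i x) = (\<Sum>i\<in>A. \<phi> (F i))"
  using A F
proof (induction A rule: finite_induct)
  case empty thus ?case using linon_zero[OF W \<phi>] by simp
next
  case (insert a A)
  have "\<phi> (\<lambda>x. F a x + (\<Sum>i\<in>A. F i x)) = \<phi> (F a) + \<phi> (\<lambda>x. \<Sum>i\<in>A. F i x)"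
    using insert subsp_sum[OF W insert(1), of F] by (intro linon_add[OF \<phi>]) auto
  thus ?case using insert by simp
qed


definition avg :: "nat \<Rightarrow> ((nat \<Rightarrow> real) \<Rightarrow> real) \<Rightarrow> real" where
  "avg n F = (\<Sum>x\<in>cube n. F x) / 2^n"

lemma avg_Suc: "avg (Suc n) F = (avg n (\<lambda>x. F (x(n:=1))) + avg n (\<lambda>x. F (x(n:=-1)))) / 2"
  unfolding avg_def sum_cube_Suc by (simp add: sum.distrib add_divide_distrib)

lemma avg_0: "avg 0 F = F (\<lambda>_. 1)"
  unfolding avg_def cube_0 by simp

lemma avg_nonneg: "(\<And>x. x \<in> cube n \<Longrightarrow> 0 \<le> F x) \<Longrightarrow> 0 \<le> avg n F"
  unfolding avg_def by (auto intro!: sum_nonneg divide_nonneg_pos)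

lemma avg_mono: "(\<And>x. x \<in> cube n \<Longrightarrow> F x \<le> G x) \<Longrightarrow> avg n F \<le> avg n G"
  unfolding avg_def by (auto intro!: sum_mono divide_right_mono)

lemma avg_cong: "(\<And>x. x \<in> cube n \<Longrightarrow> F x = G x) \<Longrightarrow> avg n F = avg n G"
  unfolding avg_def by (auto intro!: sum.cong)

lemma avg_add: "avg n (\<lambda>x. F x + G x) = avg n F + avg n G"
  unfolding avg_def by (simp add: sum.distrib add_divide_distrib)

lemma avg_scale: "avg n (\<lambda>x. c * F x) = c * avg n F"
  unfolding avg_def by (simp add: sum_distrib_left)

lemma avg_CS: "(avg n (\<lambda>x. a x * b x))\<^sup>2 \<le> avg n (\<lambda>x. (a x)\<^sup>2) * avg n (\<lambda>x. (b x)\<^sup>2)"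
proof -
  have "(\<Sum>x\<in>cube n. a x * b x)\<^sup>2 \<le> (\<Sum>x\<in>cube n. (a x)\<^sup>2) * (\<Sum>x\<in>cube n. (b x)\<^sup>2)"
    by (rule Cauchy_Schwarz_ineq_sum)
  hence "(\<Sum>x\<in>cube n. a x * b x)\<^sup>2 / (2^n * 2^n) \<le> (\<Sum>x\<in>cube n. (a x)\<^sup>2) * (\<Sum>x\<in>cube n. (b x)\<^sup>2) / (2^n * 2^n)"
    by (rule divide_right_mono) simp
  moreover have "(avg n (\<lambda>x. a x * b x))\<^sup>2 = (\<Sum>x\<in>cube n. a x * b x)\<^sup>2 / (2^n * 2^n)"
    unfolding avg_def by (simp add: power2_eq_square)
  moreover have "avg n (\<lambda>x. (a x)\<^sup>2) * avg n (\<lambda>x. (b x)\<^sup>2) = (\<Sum>x\<in>cube n. (a x)\<^sup>2) * (\<Sum>x\<in>cube n. (b x)\<^sup>2) / (2^n * 2^n)"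
    unfolding avg_def by simp
  ultimately show ?thesis by simp
qed

lemma walsh_upd: "n \<notin> S \<Longrightarrow> walsh S (x(n:=s)) = walsh S x"
  unfolding walsh_def by (rule prod.cong) auto

lemma walsh_upd_ins: "finite S \<Longrightarrow> n \<notin> S \<Longrightarrow> walsh (insert n S) (x(n:=s)) = s * walsh S x"
  using walsh_upd[of n S x s] unfolding walsh_def by simp

lemma poly_split:
  assumes f: "f \<in> polys (Suc n) k"
  shows "\<exists>g h. g \<in> polys n k \<and> h \<in> polys n (k - 1) \<and> (k = 0 \<longrightarrow> (\<forall>x. h x = 0))
           \<and> (\<forall>x\<in>cube n. f (x(n:=1)) = g x + h x) \<and> (\<forall>x\<in>cube n. f (x(n:=-1)) = g x - h x)"
proof -
  obtain c where c: "\<forall>x\<in>cube (Suc n). f x = (\<Sum>S\<in>Ix (Suc n) k. c S * walsh S x)"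
    using f unfolding polys_def by auto
  define J where "J = {S. S \<subseteq> {..<n} \<and> Suc (card S) \<le> k}"
  have finJ: "finite J" unfolding J_def by (rule finite_subset[of _ "Pow {..<n}"]) auto
  define g where "g x = (\<Sum>S\<in>Ix n k. c S * walsh S x)" for x
  define h where "h x = (\<Sum>S\<in>J. c (insert n S) * walsh S x)" for x
  have g: "g \<in> polys n k" unfolding polys_def g_def by blast
  have h: "h \<in> polys n (k - 1)"
    unfolding h_def by (intro polys_sum polys_scale polys_walsh finJ) (auto simp: J_def)
  have h0: "k = 0 \<longrightarrow> (\<forall>x. h x = 0)"
  proof
    assume "k = 0" hence "J = {}" unfolding J_def by auto
    thus "\<forall>x. h x = 0" unfolding h_def by simp
  qed
  have split: "Ix (Suc n) k = Ix n k \<union> insert n ` J"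
  proof
    show "Ix (Suc n) k \<subseteq> Ix n k \<union> insert n ` J"
    proof
      fix S assume S: "S \<in> Ix (Suc n) k"
      show "S \<in> Ix n k \<union> insert n ` J"
      proof (cases "n \<in> S")
        case False
        hence "S \<subseteq> {..<n}" using S unfolding Ix_def by (auto simp: less_Suc_eq)
        thus ?thesis using S unfolding Ix_def by auto
      next
        case True
        have fS: "finite S" using S unfolding Ix_def by (auto intro: finite_subset)
        have "S - {n} \<subseteq> {..<n}" using S unfolding Ix_def by (auto simp: less_Suc_eq)
        moreover have "card S = Suc (card (S - {n}))" by (rule card_Suc_Diff1[OF fS True, symmetric])
        ultimately have "S - {n} \<in> J" using S unfolding Ix_def J_def by auto
        moreover have "S = insert n (S - {n})" using True by auto
        ultimately show ?thesis by blast
      qed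
    qed
  next
    show "Ix n k \<union> insert n ` J \<subseteq> Ix (Suc n) k"
    proof
      fix S assume "S \<in> Ix n k \<union> insert n ` J"
      thus "S \<in> Ix (Suc n) k"
      proof
        assume "S \<in> Ix n k" thus ?thesis unfolding Ix_def by auto
      next
        assume "S \<in> insert n ` J"
        then obtain T where T: "T \<in> J" "S = insert n T" by auto
        have "finite T" "n \<notin> T" using T unfolding J_def by (auto intro: finite_subset)
        thus ?thesis using T unfolding Ix_def J_def by auto
      qed
    qed
  qed
  have disj: "Ix n k \<inter> insert n ` J = {}" unfolding Ix_def by auto
  have inj: "inj_on (insert n) J"
    unfolding J_def by (rule inj_onI) (metis Diff_insert_absorb lessThan_iff less_irrefl mem_Collect_eq subsetD)
  have main: "f (x(n:=s)) = g x + s * h x" if x: "x \<in> cube n" and s: "s = 1 \<or> s = -1" for x s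
  proof -
    have xs: "x(n:=s) \<in> cube (Suc n)" unfolding cube_Suc
      by (rule image_eqI[where x="(x,s)"]) (use x s in auto)
    have "f (x(n:=s)) = (\<Sum>S\<in>Ix n k. c S * walsh S (x(n:=s))) + (\<Sum>S\<in>insert n ` J. c S * walsh S (x(n:=s)))"
      using c xs unfolding split by (simp add: sum.union_disjoint disj finJ)
    also have "(\<Sum>S\<in>Ix n k. c S * walsh S (x(n:=s))) = g x"
      unfolding g_def
    proof (rule sum.cong[OF refl])
      fix S assume "S \<in> Ix n k"
      hence "n \<notin> S" unfolding Ix_def by auto
      thus "c S * walsh S (x(n:=s)) = c S * walsh S x" by (simp add: walsh_upd)
    qed
    also have "(\<Sum>S\<in>insert n ` J. c S * walsh S (x(n:=s))) = (\<Sum>S\<in>J. c (insert n S) * walsh (insert n S) (x(n:=s)))"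
      by (subst sum.reindex[OF inj]) (simp add: comp_def)
    also have "\<dots> = s * h x"
      unfolding h_def sum_distrib_left
    proof (rule sum.cong)
      fix S assume "S \<in> J"
      hence "finite S" "n \<notin> S" unfolding J_def by (auto intro: finite_subset)
      thus "c (insert n S) * walsh (insert n S) (x(n:=s)) = s * (c (insert n S) * walsh S x)"
        by (simp add: walsh_upd_ins)
    qed simp
    finally show ?thesis .
  qed
  have m1: "\<forall>x\<in>cube n. f (x(n:=1)) = g x + h x" using main[of _ 1] by simp
  have m2: "\<forall>x\<in>cube n. f (x(n:=-1)) = g x - h x" using main[of _ "-1"] by simp
  show ?thesis using g h h0 m1 m2 by blast
qed

lemma p22: "((a::real)^2)^2 = a^4" by algebra
lemma q4: "((a::real)+b)^4 + (a-b)^4 = 2*(a^4 + 6*(a^2*b^2) + b^4)" by algebra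
lemma q2: "((a::real)+b)^2 + (a-b)^2 = 2*(a^2 + b^2)" by algebra

lemma avg_half: "(avg n P + avg n Q) / 2 = avg n (\<lambda>x. (P x + Q x) / 2)"
proof -
  have "avg n (\<lambda>x. (P x + Q x) / 2) = avg n (\<lambda>x. (1/2) * (P x + Q x))" by simp
  also have "\<dots> = (1/2) * (avg n P + avg n Q)" by (simp only: avg_scale avg_add)
  finally show ?thesis by simp
qed

lemma bonami: "f \<in> polys n k \<Longrightarrow> avg n (\<lambda>x. f x ^ 4) \<le> 9^k * (avg n (\<lambda>x. f x ^ 2))\<^sup>2"
proof (induction n arbitrary: k f)
  case 0
  have "(f (\<lambda>_. 1))^4 = ((f (\<lambda>_. 1))^2)^2" by simp
  moreover have "1 * ((f (\<lambda>_. 1))^2)^2 \<le> 9^k * ((f (\<lambda>_. 1))^2)^2"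
    by (rule mult_right_mono) auto
  ultimately show ?case by (simp add: avg_0)
next
  case (Suc n)
  obtain g h where g: "g \<in> polys n k" and h: "h \<in> polys n (k - 1)" and h0: "k = 0 \<longrightarrow> (\<forall>x. h x = 0)"
    and fgh1: "\<forall>x\<in>cube n. f (x(n:=1)) = g x + h x" and fgh2: "\<forall>x\<in>cube n. f (x(n:=-1)) = g x - h x"
    using poly_split[OF Suc.prems] by blast
  have fp: "f (x(n:=1)) = g x + h x" "f (x(n:=-1)) = g x - h x" if "x \<in> cube n" for x
    using fgh1 fgh2 that by blast+
  define a where "a = avg n (\<lambda>x. g x ^ 2)"
  define b where "b = avg n (\<lambda>x. h x ^ 2)"
  define A where "A = avg n (\<lambda>x. g x ^ 4)"
  define B where "B = avg n (\<lambda>x. h x ^ 4)"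
  define M where "M = avg n (\<lambda>x. g x ^ 2 * h x ^ 2)"
  have a0: "0 \<le> a" and b0: "0 \<le> b" and M0: "0 \<le> M" unfolding a_def b_def M_def by (auto intro!: avg_nonneg)
  have IHg: "A \<le> 9^k * a\<^sup>2" unfolding A_def a_def by (rule Suc.IH[OF g])
  have IHh: "B \<le> 9^(k-1) * b\<^sup>2" unfolding B_def b_def by (rule Suc.IH[OF h])
  have CS: "M\<^sup>2 \<le> A * B"
    unfolding M_def A_def B_def using avg_CS[of n "\<lambda>x. g x ^ 2" "\<lambda>x. h x ^ 2"]
    by (simp only: p22)
  have E4: "avg (Suc n) (\<lambda>x. f x ^ 4) = A + 6 * M + B"
  proof -
    have e1: "avg n (\<lambda>x. f (x(n:=1)) ^ 4) = avg n (\<lambda>x. (g x + h x)^4)" by (rule avg_cong) (simp add: fp)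
    have e2: "avg n (\<lambda>x. f (x(n:=-1)) ^ 4) = avg n (\<lambda>x. (g x - h x)^4)" by (rule avg_cong) (simp add: fp)
    have "avg (Suc n) (\<lambda>x. f x ^ 4) = (avg n (\<lambda>x. (g x + h x)^4) + avg n (\<lambda>x. (g x - h x)^4)) / 2"
      by (simp only: avg_Suc e1 e2)
    also have "\<dots> = avg n (\<lambda>x. ((g x + h x)^4 + (g x - h x)^4) / 2)" by (rule avg_half)
    also have "\<dots> = avg n (\<lambda>x. g x ^ 4 + 6 * (g x ^ 2 * h x ^ 2) + h x ^ 4)"
      by (rule avg_cong) (simp add: q4)
    also have "\<dots> = A + 6 * M + B" unfolding A_def M_def B_def by (simp add: avg_add avg_scale)
    finally show ?thesis .
  qed
  have E2: "avg (Suc n) (\<lambda>x. f x ^ 2) = a + b"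
  proof -
    have e1: "avg n (\<lambda>x. f (x(n:=1)) ^ 2) = avg n (\<lambda>x. (g x + h x)^2)" by (rule avg_cong) (simp add: fp)
    have e2: "avg n (\<lambda>x. f (x(n:=-1)) ^ 2) = avg n (\<lambda>x. (g x - h x)^2)" by (rule avg_cong) (simp add: fp)
    have "avg (Suc n) (\<lambda>x. f x ^ 2) = (avg n (\<lambda>x. (g x + h x)^2) + avg n (\<lambda>x. (g x - h x)^2)) / 2"
      by (simp only: avg_Suc e1 e2)
    also have "\<dots> = avg n (\<lambda>x. ((g x + h x)^2 + (g x - h x)^2) / 2)" by (rule avg_half)
    also have "\<dots> = avg n (\<lambda>x. g x ^ 2 + h x ^ 2)"
      by (rule avg_cong) (simp add: q2)
    also have "\<dots> = a + b" unfolding a_def b_def by (simp add: avg_add)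
    finally show ?thesis .
  qed
  show ?case
  proof (cases "k = 0")
    case True
    hence "B = 0" "M = 0" "b = 0" using h0 unfolding B_def M_def b_def avg_def by simp_all
    thus ?thesis unfolding E4 E2 using IHg by simp
  next
    case False
    define K :: real where "K = 9^(k-1)"
    have K0: "0 \<le> K" unfolding K_def by simp
    have 9: "(9::real)^k = 9 * K" unfolding K_def using False by (cases k) simp_all
    have A0: "0 \<le> A" unfolding A_def by (rule avg_nonneg) simp
    have B0: "0 \<le> B" unfolding B_def by (rule avg_nonneg) simp
    have IHg': "A \<le> 9 * K * a\<^sup>2" using IHg unfolding 9 .
    have IHh': "B \<le> K * b\<^sup>2" using IHh unfolding K_def .
    have "(6 * M)\<^sup>2 = 36 * M\<^sup>2" by algebra
    also have "\<dots> \<le> 36 * (A * B)" using CS by simp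
    also have "\<dots> \<le> 36 * ((9 * K * a\<^sup>2) * (K * b\<^sup>2))"
      using IHg' IHh' A0 B0 K0 by (intro mult_left_mono mult_mono) auto
    also have "\<dots> = (18 * K * a * b)\<^sup>2" by algebra
    finally have sq: "(6 * M)\<^sup>2 \<le> (18 * K * a * b)\<^sup>2" .
    have "6 * M \<le> 18 * K * a * b"
      by (rule power2_le_imp_le[OF sq]) (use a0 b0 K0 in simp)
    hence 1: "A + 6 * M + B \<le> 9 * K * a\<^sup>2 + 18 * K * a * b + K * b\<^sup>2" using IHg' IHh' by linarith
    have 2: "9 * K * (a + b)\<^sup>2 - (9 * K * a\<^sup>2 + 18 * K * a * b + K * b\<^sup>2) = 8 * K * b\<^sup>2" by algebra
    have 3: "0 \<le> 8 * K * b\<^sup>2" using K0 by simp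
    show ?thesis unfolding E4 E2 9 using 1 2 3 by linarith
  qed
qed


lemma moments:
  "\<exists>K\<ge>0. \<forall>n f. f \<in> polys n k \<longrightarrow> avg n (\<lambda>x. f x ^ (2 * 2^j)) \<le> K * (avg n (\<lambda>x. f x ^ 2)) ^ (2^j)"
proof (induction j arbitrary: k)
  case 0
  show ?case by (rule exI[of _ 1]) simp
next
  case (Suc j)
  obtain K' where K': "K' \<ge> 0" "\<forall>n f. f \<in> polys n (2 * k) \<longrightarrow> avg n (\<lambda>x. f x ^ (2 * 2^j)) \<le> K' * (avg n (\<lambda>x. f x ^ 2)) ^ (2^j)"
    using Suc.IH[of "2 * k"] by blast
  define K where "K = K' * ((9::real)^k)^(2^j)"
  have K0: "K \<ge> 0" unfolding K_def using K'(1) by simp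
  have "\<forall>n f. f \<in> polys n k \<longrightarrow> avg n (\<lambda>x. f x ^ (2 * 2^Suc j)) \<le> K * (avg n (\<lambda>x. f x ^ 2)) ^ (2^Suc j)"
  proof (intro allI impI)
    fix n f assume f: "f \<in> polys n k"
    have f2: "(\<lambda>x. f x ^ 2) \<in> polys n (2 * k)"
    proof -
      have "(\<lambda>x. f x * f x) \<in> polys n (k + k)" by (rule polys_mult[OF f f])
      hence "(\<lambda>x. f x * f x) \<in> polys n (2 * k)" by (simp add: mult_2)
      thus ?thesis by (rule polys_cong) (simp add: power2_eq_square)
    qed
    have e: "2 * 2 ^ Suc j = 2 * (2 * 2 ^ j)" by simp
    have "avg n (\<lambda>x. f x ^ (2 * 2^Suc j)) = avg n (\<lambda>x. (f x ^ 2) ^ (2 * 2^j))"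
      by (rule avg_cong) (simp only: e power_mult)
    also have "\<dots> \<le> K' * (avg n (\<lambda>x. (f x ^ 2) ^ 2)) ^ (2^j)"
      using K'(2) f2 by blast
    also have "avg n (\<lambda>x. (f x ^ 2) ^ 2) = avg n (\<lambda>x. f x ^ 4)"
      by (rule avg_cong) (simp only: p22)
    also have "K' * (avg n (\<lambda>x. f x ^ 4)) ^ (2^j) \<le> K' * (9^k * (avg n (\<lambda>x. f x ^ 2))\<^sup>2) ^ (2^j)"
      by (intro mult_left_mono power_mono bonami[OF f] avg_nonneg K'(1)) simp
    also have "\<dots> = K * (avg n (\<lambda>x. f x ^ 2)) ^ (2^Suc j)"
      unfolding K_def by (simp add: power_mult_distrib power_mult[symmetric] mult.assoc)
    finally show "avg n (\<lambda>x. f x ^ (2 * 2^Suc j)) \<le> K * (avg n (\<lambda>x. f x ^ 2)) ^ (2^Suc j)" .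
  qed
  thus ?case using K0 by blast
qed

lemma pw1: "sqrt \<bar>a::real\<bar> * (sqrt \<bar>a\<bar> * \<bar>a\<bar>) = a\<^sup>2"
proof -
  have "sqrt \<bar>a\<bar> * sqrt \<bar>a\<bar> = \<bar>a\<bar>" by simp
  hence "sqrt \<bar>a\<bar> * (sqrt \<bar>a\<bar> * \<bar>a\<bar>) = \<bar>a\<bar> * \<bar>a\<bar>" by (simp add: mult.assoc[symmetric])
  thus ?thesis by (simp add: power2_eq_square)
qed

lemma pw2: "(sqrt \<bar>a::real\<bar>)\<^sup>2 = \<bar>a\<bar>" by simp

lemma pw3: "(sqrt \<bar>a::real\<bar> * \<bar>a\<bar>)\<^sup>2 = \<bar>a\<bar> ^ 3"
proof -
  have "(sqrt \<bar>a\<bar> * \<bar>a\<bar>)\<^sup>2 = (sqrt \<bar>a\<bar>)\<^sup>2 * \<bar>a\<bar>\<^sup>2" by (simp add: power_mult_distrib)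
  also have "\<dots> = \<bar>a\<bar> * \<bar>a\<bar>\<^sup>2" by simp
  also have "\<dots> = \<bar>a\<bar> ^ 3" by (simp add: power2_eq_square power3_eq_cube)
  finally show ?thesis .
qed

lemma pw4: "\<bar>a::real\<bar> * a\<^sup>2 = \<bar>a\<bar> ^ 3"
proof -
  have "a\<^sup>2 = \<bar>a\<bar>\<^sup>2" by simp
  thus ?thesis by (simp add: power2_eq_square power3_eq_cube)
qed

lemma l2l1:
  assumes f: "f \<in> polys n k"
  shows "avg n (\<lambda>x. f x ^ 2) \<le> 9^k * (avg n (\<lambda>x. \<bar>f x\<bar>))\<^sup>2"
proof -
  define X where "X = avg n (\<lambda>x. f x ^ 2)"
  define Y where "Y = avg n (\<lambda>x. \<bar>f x\<bar>)"
  define Z where "Z = avg n (\<lambda>x. \<bar>f x\<bar> ^ 3)"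
  define Q where "Q = avg n (\<lambda>x. f x ^ 4)"
  have X0: "0 \<le> X" unfolding X_def by (rule avg_nonneg) simp
  have Y0: "0 \<le> Y" unfolding Y_def by (rule avg_nonneg) simp
  have Z0: "0 \<le> Z" unfolding Z_def by (rule avg_nonneg) simp
  have CS1: "X\<^sup>2 \<le> Y * Z"
  proof -
    have "(avg n (\<lambda>x. sqrt \<bar>f x\<bar> * (sqrt \<bar>f x\<bar> * \<bar>f x\<bar>)))\<^sup>2
          \<le> avg n (\<lambda>x. (sqrt \<bar>f x\<bar>)\<^sup>2) * avg n (\<lambda>x. (sqrt \<bar>f x\<bar> * \<bar>f x\<bar>)\<^sup>2)"
      by (rule avg_CS)
    thus ?thesis unfolding X_def Y_def Z_def by (simp only: pw1 pw2 pw3)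
  qed
  have CS2: "Z\<^sup>2 \<le> X * Q"
  proof -
    have "(avg n (\<lambda>x. \<bar>f x\<bar> * (f x)\<^sup>2))\<^sup>2 \<le> avg n (\<lambda>x. \<bar>f x\<bar>\<^sup>2) * avg n (\<lambda>x. ((f x)\<^sup>2)\<^sup>2)"
      by (rule avg_CS)
    thus ?thesis unfolding X_def Z_def Q_def by (simp only: pw4 power2_abs p22)
  qed
  have B: "Q \<le> 9^k * X\<^sup>2" unfolding Q_def X_def by (rule bonami[OF f])
  show ?thesis
  proof (cases "X = 0")
    case True thus ?thesis unfolding X_def[symmetric] Y_def[symmetric] by simp
  next
    case False
    hence Xp: "0 < X" using X0 by simp
    have "(X\<^sup>2)\<^sup>2 \<le> (Y * Z)\<^sup>2" by (rule power_mono[OF CS1]) simp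
    also have "\<dots> = Y\<^sup>2 * Z\<^sup>2" by (simp add: power_mult_distrib)
    also have "\<dots> \<le> Y\<^sup>2 * (X * Q)" by (rule mult_left_mono[OF CS2]) simp
    also have "\<dots> \<le> Y\<^sup>2 * (X * (9^k * X\<^sup>2))" using B X0 by (intro mult_left_mono) simp_all
    finally have "X ^ 3 * X \<le> X ^ 3 * (9^k * Y\<^sup>2)"
      by (simp add: power2_eq_square power3_eq_cube ac_simps)
    hence "X \<le> 9^k * Y\<^sup>2" using Xp by simp
    thus ?thesis unfolding X_def Y_def .
  qed
qed

lemma abs_powr_even: "0 < m \<Longrightarrow> even m \<Longrightarrow> \<bar>a::real\<bar> powr (real m) = a ^ m"
proof -
  assume m: "0 < m" "even m"
  have "\<bar>a\<bar> powr (real m) = \<bar>a\<bar> ^ m"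
  proof (cases "a = 0")
    case True thus ?thesis using m by simp
  next
    case False thus ?thesis by (simp add: powr_realpow)
  qed
  also have "\<dots> = a ^ m" using m(2) by (simp add: power_even_abs)
  finally show ?thesis .
qed

lemma pow_powr_inv: "0 \<le> (z::real) \<Longrightarrow> 0 < m \<Longrightarrow> (z ^ m) powr (1 / real m) = z"
proof -
  assume z: "0 \<le> z" and m: "0 < m"
  show ?thesis
  proof (cases "z = 0")
    case True thus ?thesis using m by simp
  next
    case False
    hence zp: "0 < z" using z by simp
    have "z ^ m = z powr (real m)" using zp by (simp add: powr_realpow)
    hence "(z ^ m) powr (1 / real m) = z powr (real m * (1 / real m))" by (simp add: powr_powr)
    also have "\<dots> = z" using m zp by simp
    finally show ?thesis .
  qed
qed

lemma deg_bound:
  assumes p: "1 \<le> p" and pq: "p \<le> q"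
  shows "\<exists>C. \<forall>n f. deg_le n k f \<longrightarrow> lnorm n (ereal q) f \<le> C * lnorm n (ereal p) f"
proof -
  define j where "j = nat \<lceil>q\<rceil>"
  define m :: nat where "m = 2 * 2^j"
  have "q \<le> real j" unfolding j_def by linarith
  also have "real j \<le> real m"
  proof -
    have "j \<le> m" unfolding m_def using less_exp[of j] by linarith
    thus ?thesis by (simp only: of_nat_le_iff)
  qed
  finally have qm: "q \<le> real m" .
  have m0: "0 < m" unfolding m_def by simp
  have me: "even m" unfolding m_def by simp
  obtain K where K0: "K \<ge> 0" and K: "\<forall>n f. f \<in> polys n k \<longrightarrow> avg n (\<lambda>x. f x ^ m) \<le> K * (avg n (\<lambda>x. f x ^ 2)) ^ (2^j)"
    using moments[of k j] unfolding m_def by blast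
  define C where "C = K powr (1 / real m) * 3^k"
  have C0: "0 \<le> C" unfolding C_def by simp
  have "lnorm n (ereal q) f \<le> C * lnorm n (ereal p) f" if d: "deg_le n k f" for n f
  proof -
    have f: "f \<in> polys n k" by (rule deg_le_polys[OF d])
    define Y where "Y = avg n (\<lambda>x. \<bar>f x\<bar>)"
    have Y0: "0 \<le> Y" unfolding Y_def by (rule avg_nonneg) simp
    have Y1: "Y = lnorm n (ereal 1) f" unfolding Y_def avg_def lnorm_1 ..
    have lm: "lnorm n (ereal (real m)) f = (avg n (\<lambda>x. f x ^ m)) powr (1 / real m)"
      unfolding lnorm_ereal avg_def using abs_powr_even[OF m0 me] by simp
    have am: "avg n (\<lambda>x. f x ^ m) \<le> K * (3^k * Y) ^ m"
    proof -
      have "avg n (\<lambda>x. f x ^ m) \<le> K * (avg n (\<lambda>x. f x ^ 2)) ^ (2^j)" using K f by blast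
      also have "\<dots> \<le> K * (9^k * Y\<^sup>2) ^ (2^j)"
        by (intro mult_left_mono power_mono K0 avg_nonneg) (simp_all add: Y_def l2l1[OF f])
      also have "(9::real)^k * Y\<^sup>2 = (3^k * Y)\<^sup>2"
      proof -
        have "(3::real)^k * 3^k = (3 * 3)^k" by (rule power_mult_distrib[symmetric])
        thus ?thesis by (simp add: power2_eq_square mult_ac)
      qed
      also have "((3^k * Y)\<^sup>2) ^ (2^j) = (3^k * Y) ^ m" unfolding m_def by (simp add: power_mult)
      finally show ?thesis .
    qed
    have "lnorm n (ereal q) f \<le> lnorm n (ereal (real m)) f" by (rule lnorm_mono[OF order_trans[OF p pq] qm])
    also have "\<dots> = (avg n (\<lambda>x. f x ^ m)) powr (1 / real m)" by (rule lm)
    also have "\<dots> \<le> (K * (3^k * Y) ^ m) powr (1 / real m)"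
    proof (rule powr_mono2)
      show "0 \<le> avg n (\<lambda>x. f x ^ m)" by (rule avg_nonneg) (simp add: me zero_le_even_power)
    qed (use am in simp_all)
    also have "\<dots> = K powr (1 / real m) * ((3^k * Y) ^ m) powr (1 / real m)"
      using K0 Y0 by (simp add: powr_mult)
    also have "((3^k * Y) ^ m) powr (1 / real m) = 3^k * Y" using Y0 m0 by (simp add: pow_powr_inv)
    also have "K powr (1 / real m) * (3^k * Y) = C * Y" unfolding C_def by simp
    also have "Y \<le> lnorm n (ereal p) f" unfolding Y1 by (rule lnorm_mono[OF order_refl p])
    hence "C * Y \<le> C * lnorm n (ereal p) f" using C0 by (rule mult_left_mono)
    finally show ?thesis .
  qed
  thus ?thesis by blast
qed


lemma td_nonneg: "0 \<le> tail_dist n k a f"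
  unfolding tail_dist_def using tail_zero[of n k]
  by (intro cINF_greatest) (auto simp: lnorm_nonneg)

lemma td_le: "g \<in> tail_space n k \<Longrightarrow> tail_dist n k a f \<le> lnorm n a (\<lambda>x. f x - g x)"
  unfolding tail_dist_def
  by (rule cINF_lower) (auto intro: bdd_belowI2[where m=0] simp: lnorm_nonneg)

lemma td_ge: "(\<And>g. g \<in> tail_space n k \<Longrightarrow> C \<le> lnorm n a (\<lambda>x. f x - g x)) \<Longrightarrow> C \<le> tail_dist n k a f"
  unfolding tail_dist_def using tail_zero[of n k]
  by (intro cINF_greatest) auto

lemma subsp_tail: "subsp (tail_space n k)"
  unfolding subsp_def using tail_zero tail_add tail_scale by blast

lemma linon_zero_fn: "linon (\<lambda>_. 0) W"
  by (simp add: linon_def)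

lemma sublin_lnorm: "conjpair a b \<Longrightarrow> sublin (lnorm n a)"
  unfolding sublin_def using minkowski homog by blast

lemma deg_le_zero: "deg_le n k (\<lambda>_. 0)"
  unfolding deg_le_def fcoeff_def by simp

lemma deg_le_one: "deg_le n k (\<lambda>_. 1)"
  unfolding deg_le_def
proof (intro allI impI)
  fix R assume R: "R \<subseteq> {..<n}" "k < card R"
  hence Rne: "R \<noteq> {}" by auto
  have "fcoeff n (\<lambda>_. 1) R = fcoeff n (walsh {}) R" unfolding fcoeff_def by simp
  also have "\<dots> = (if {} = R then 1 else 0)" by (rule fcoeff_walsh) (use R in auto)
  also have "\<dots> = 0" using Rne by simp
  finally show "fcoeff n (\<lambda>_. 1) R = 0" .
qed

lemma dual:
  assumes p: "1 \<le> p"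
  shows "\<exists>h. deg_le n k h \<and> lnorm n (ereal p) h \<le> 1 \<and> (\<Sum>x\<in>cube n. f x * h x) / 2^n = tail_dist n k (conj_exp p) f"
proof -
  define a where "a = conj_exp p"
  have cp: "conjpair (ereal p) a" unfolding a_def by (rule conjpair_conj_exp[OF p])
  have cp': "conjpair a (ereal p)" by (rule conjpair_sym[OF cp])
  define d where "d = tail_dist n k a f"
  have d0: "0 \<le> d" unfolding d_def by (rule td_nonneg)
  show ?thesis
  proof (cases "d = 0")
    case True
    have "lnorm n (ereal p) (\<lambda>_. 0) = 0" by (rule lnorm_zero) simp
    thus ?thesis using True deg_le_zero unfolding d_def a_def by (intro exI[of _ "\<lambda>_. 0"]) auto
  next
    case False
    hence dp: "0 < d" using d0 by simp
    define S where "S = lnorm n a"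
    have sl: "sublin S" unfolding S_def by (rule sublin_lnorm[OF cp'])
    define T where "T = tail_space n k"
    have sT: "subsp T" unfolding T_def by (rule subsp_tail)
    have fT: "f \<notin> T"
    proof
      assume "f \<in> T"
      hence "d \<le> lnorm n a (\<lambda>x. f x - f x)" unfolding d_def T_def by (rule td_le)
      also have "\<dots> = 0" by (rule lnorm_zero) simp
      finally show False using dp by simp
    qed
    have bd0: "\<forall>w\<in>T. (\<lambda>_. 0::real) w \<le> S w" unfolding S_def by (simp add: lnorm_nonneg)
    have c1: "\<forall>w\<in>T. (\<lambda>_. 0::real) w - S (\<lambda>x. w x - f x) \<le> d"
    proof
      fix w assume "w \<in> T"
      have "0 \<le> lnorm n a (\<lambda>x. w x - f x)" by (rule lnorm_nonneg)
      thus "(\<lambda>_. 0::real) w - S (\<lambda>x. w x - f x) \<le> d" using d0 unfolding S_def by simp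
    qed
    have c2: "\<forall>w\<in>T. d \<le> S (\<lambda>x. w x + f x) - (\<lambda>_. 0::real) w"
    proof
      fix w assume w: "w \<in> T"
      have "(\<lambda>x. (-1) * w x) \<in> T" unfolding T_def using w unfolding T_def by (rule tail_scale)
      hence "d \<le> lnorm n a (\<lambda>x. f x - (-1) * w x)" unfolding d_def T_def by (rule td_le)
      also have "(\<lambda>x. f x - (-1) * w x) = (\<lambda>x. w x + f x)" by auto
      finally show "d \<le> S (\<lambda>x. w x + f x) - (\<lambda>_. 0::real) w" unfolding S_def by simp
    qed
    obtain \<phi>1 where \<phi>1: "linon \<phi>1 (extsp T f)" "\<forall>w\<in>T. \<phi>1 w = 0" "\<phi>1 f = d" "\<forall>u\<in>extsp T f. \<phi>1 u \<le> S u"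
      using hb_step[OF sT linon_zero_fn sl bd0 fT c1 c2] by auto
    define W1 where "W1 = extsp T f"
    have sW1: "subsp W1" unfolding W1_def by (rule subsp_ext[OF sT])
    have TW1: "T \<subseteq> W1" unfolding W1_def by (rule subset_ext[OF sT])
    have fW1: "f \<in> W1" unfolding W1_def by (rule in_ext[OF sT])
    define \<delta> where "\<delta> y = (\<lambda>x. if x = y then (1::real) else 0)" for y :: "nat \<Rightarrow> real"
    obtain W2 \<psi> where W2: "subsp W2" "W1 \<subseteq> W2" "\<delta> ` cube n \<subseteq> W2" "linon \<psi> W2"
        "\<forall>w\<in>W1. \<psi> w = \<phi>1 w" "\<forall>u\<in>W2. \<psi> u \<le> S u"
      using hb_finite[of "\<delta> ` cube n" W1 \<phi>1 S] sW1 \<phi>1 sl unfolding W1_def by auto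
    define h where "h y = 2^n * \<psi> (\<delta> y)" for y
    have rep: "\<psi> u = (\<Sum>x\<in>cube n. u x * h x) / 2^n" "u \<in> W2" if "u \<in> W2" for u
    proof -
      define U where "U = (\<lambda>x. \<Sum>y\<in>cube n. u y * \<delta> y x)"
      have Fi: "(\<lambda>x. u y * \<delta> y x) \<in> W2" if "y \<in> cube n" for y
        using W2(3) that by (intro subsp_scale[OF W2(1)]) auto
      have UW: "U \<in> W2" unfolding U_def by (rule subsp_sum[OF W2(1) finite_cube Fi])
      have psiU: "\<psi> U = (\<Sum>y\<in>cube n. u y * \<psi> (\<delta> y))"
      proof -
        have "\<psi> U = (\<Sum>y\<in>cube n. \<psi> (\<lambda>x. u y * \<delta> y x))"
          unfolding U_def by (rule linon_sum[OF W2(1) W2(4) finite_cube Fi])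
        also have "\<dots> = (\<Sum>y\<in>cube n. u y * \<psi> (\<delta> y))"
          using W2(3) by (intro sum.cong refl linon_scale[OF W2(4)]) auto
        finally show ?thesis .
      qed
      have Ux: "U x = u x" if "x \<in> cube n" for x
      proof -
        have "U x = (\<Sum>y\<in>cube n. if y = x then u x else 0)"
          unfolding U_def \<delta>_def by (rule sum.cong) auto
        also have "\<dots> = u x" using that by simp
        finally show ?thesis .
      qed
      define z where "z = (\<lambda>x. u x + (-1) * U x)"
      have zW: "z \<in> W2" unfolding z_def using that UW by (intro subsp_add[OF W2(1)] subsp_scale[OF W2(1)])
      have zW': "(\<lambda>x. (-1) * z x) \<in> W2" using zW by (rule subsp_scale[OF W2(1)])
      have Sz: "S z = 0" unfolding S_def by (rule lnorm_zero) (simp add: z_def Ux)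
      have Sz': "S (\<lambda>x. (-1) * z x) = 0" unfolding S_def by (rule lnorm_zero) (simp add: z_def Ux)
      have "\<psi> z \<le> 0" using W2(6) zW Sz by auto
      moreover have "\<psi> (\<lambda>x. (-1) * z x) \<le> 0" using W2(6) zW' Sz' by auto
      hence "- \<psi> z \<le> 0" using linon_scale[OF W2(4) zW, of "-1"] by simp
      ultimately have "\<psi> z = 0" by simp
      moreover have "\<psi> z = \<psi> u + (-1) * \<psi> U"
      proof -
        have mU: "(\<lambda>x. (-1) * U x) \<in> W2" by (rule subsp_scale[OF W2(1) UW])
        have "\<psi> z = \<psi> u + \<psi> (\<lambda>x. (-1) * U x)" unfolding z_def by (rule linon_add[OF W2(4) that mU])
        also have "\<psi> (\<lambda>x. (-1) * U x) = (-1) * \<psi> U" by (rule linon_scale[OF W2(4) UW])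
        finally show ?thesis .
      qed
      ultimately have "\<psi> u = \<psi> U" by simp
      also have "\<dots> = (\<Sum>x\<in>cube n. u x * h x) / 2^n"
        unfolding psiU h_def by (simp add: sum_divide_distrib mult.left_commute)
      finally show "\<psi> u = (\<Sum>x\<in>cube n. u x * h x) / 2^n" .
      show "u \<in> W2" by (rule that)
    qed
    have E: "(\<Sum>x\<in>cube n. f x * h x) / 2^n = d"
    proof -
      have "f \<in> W2" using fW1 W2(2) by blast
      hence "(\<Sum>x\<in>cube n. f x * h x) / 2^n = \<psi> f" using rep by simp
      also have "\<dots> = \<phi>1 f" using W2(5) fW1 by simp
      finally show ?thesis using \<phi>1(3) by simp
    qed
    have D: "deg_le n k h"
      unfolding deg_le_def
    proof (intro allI impI)
      fix R assume R: "R \<subseteq> {..<n}" "k < card R"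
      have wT: "walsh R \<in> T" unfolding T_def by (rule walsh_tail[OF R])
      hence wW: "walsh R \<in> W2" using TW1 W2(2) by blast
      have "fcoeff n h R = (\<Sum>x\<in>cube n. walsh R x * h x) / 2^n"
        unfolding fcoeff_def by (simp add: mult.commute)
      also have "\<dots> = \<psi> (walsh R)" using rep[OF wW] by simp
      also have "\<dots> = \<phi>1 (walsh R)" using W2(5) wT TW1 by blast
      also have "\<dots> = 0" using \<phi>1(2) wT by blast
      finally show "fcoeff n h R = 0" .
    qed
    have N: "lnorm n (ereal p) h \<le> 1"
    proof -
      obtain w where w: "lnorm n a w \<le> 1" "(\<Sum>x\<in>cube n. w x * h x) / 2^n = lnorm n (ereal p) h"
        using norming[OF cp, of n h] by blast
      define V where "V = (\<lambda>x. \<Sum>y\<in>cube n. w y * \<delta> y x)"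
      have Fi: "(\<lambda>x. w y * \<delta> y x) \<in> W2" if "y \<in> cube n" for y
        using W2(3) that by (intro subsp_scale[OF W2(1)]) auto
      have VW: "V \<in> W2" unfolding V_def by (rule subsp_sum[OF W2(1) finite_cube Fi])
      have Vx: "V x = w x" if "x \<in> cube n" for x
      proof -
        have "V x = (\<Sum>y\<in>cube n. if y = x then w x else 0)"
          unfolding V_def \<delta>_def by (rule sum.cong) auto
        also have "\<dots> = w x" using that by simp
        finally show ?thesis .
      qed
      have "lnorm n (ereal p) h = (\<Sum>x\<in>cube n. V x * h x) / 2^n"
        unfolding w(2)[symmetric] using Vx by (simp cong: sum.cong)
      also have "\<dots> = \<psi> V" using rep[OF VW] by simp
      also have "\<dots> \<le> S V" using W2(6) VW by blast
      also have "S V = lnorm n a w" unfolding S_def by (rule lnorm_cong) (simp add: Vx)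
      also have "\<dots> \<le> 1" by (rule w(1))
      finally show ?thesis .
    qed
    show ?thesis using D N E unfolding d_def a_def by blast
  qed
qed


theorem proposition1p1:
  fixes p q :: real and k :: nat
  assumes "1 \<le> p" and "p \<le> q"
  shows "\<exists>M. least_elem {C. \<forall>n\<ge>k. \<forall>f. deg_le n k f \<longrightarrow>
                   lnorm n (ereal q) f \<le> C * lnorm n (ereal p) f} M
           \<and> least_elem {C. \<forall>n\<ge>k. \<forall>f.
                   tail_dist n k (conj_exp p) f \<le> C * tail_dist n k (conj_exp q) f} M"
proof -
  define A1 where "A1 = {C. \<forall>n\<ge>k. \<forall>f. deg_le n k f \<longrightarrow> lnorm n (ereal q) f \<le> C * lnorm n (ereal p) f}"
  define A2 where "A2 = {C. \<forall>n\<ge>k. \<forall>f. tail_dist n k (conj_exp p) f \<le> C * tail_dist n k (conj_exp q) f}"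
  have p1: "1 \<le> p" and q1: "1 \<le> q" using assms by auto
  have p0: "0 < p" and q0: "0 < q" using p1 q1 by auto
  have cq: "conjpair (ereal q) (conj_exp q)" by (rule conjpair_conj_exp[OF q1])
  have cp: "conjpair (ereal p) (conj_exp p)" by (rule conjpair_conj_exp[OF p1])
  have cp': "conjpair (conj_exp p) (ereal p)" by (rule conjpair_sym[OF cp])
  obtain C0 where C0: "\<forall>n f. deg_le n k f \<longrightarrow> lnorm n (ereal q) f \<le> C0 * lnorm n (ereal p) f"
    using deg_bound[OF assms] by blast
  have C0A: "C0 \<in> A1" unfolding A1_def using C0 by blast
  have ne: "A1 \<noteq> {}" using C0A by blast
  have lb: "1 \<le> C" if "C \<in> A1" for C
  proof -
    have "lnorm k (ereal q) (\<lambda>_. 1) \<le> C * lnorm k (ereal p) (\<lambda>_. 1)"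
      using that deg_le_one[of k k] unfolding A1_def by blast
    thus ?thesis using lnorm_one[OF p0] lnorm_one[OF q0] by simp
  qed
  have bdd: "bdd_below A1" using lb by (intro bdd_belowI[where m=1]) auto
  define M where "M = Inf A1"
  have M_le: "M \<le> C" if "C \<in> A1" for C unfolding M_def by (rule cInf_lower[OF that bdd])
  have M_in: "M \<in> A1"
    unfolding A1_def
  proof (intro CollectI allI impI)
    fix n f assume n: "k \<le> n" and d: "deg_le n k f"
    define a where "a = lnorm n (ereal q) f"
    define b where "b = lnorm n (ereal p) f"
    have b0: "0 \<le> b" unfolding b_def by (rule lnorm_nonneg)
    show "lnorm n (ereal q) f \<le> M * lnorm n (ereal p) f"
    proof (cases "b = 0")
      case True
      have "a \<le> C0 * b" using C0 d unfolding a_def b_def by blast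
      thus ?thesis using True unfolding a_def[symmetric] b_def[symmetric] by simp
    next
      case False
      hence bp: "0 < b" using b0 by simp
      have "a / b \<le> M" unfolding M_def
      proof (rule cInf_greatest[OF ne])
        fix C assume "C \<in> A1"
        hence "a \<le> C * b" using n d unfolding A1_def a_def b_def by blast
        thus "a / b \<le> C" using bp by (simp add: divide_le_eq)
      qed
      thus ?thesis using bp unfolding a_def[symmetric] b_def[symmetric] by (simp add: divide_le_eq)
    qed
  qed
  have M1: "1 \<le> M" by (rule lb[OF M_in])
  have MA2: "M \<in> A2"
    unfolding A2_def
  proof (intro CollectI allI impI)
    fix n f assume n: "k \<le> n"
    obtain h where h: "deg_le n k h" "lnorm n (ereal p) h \<le> 1"
      "(\<Sum>x\<in>cube n. f x * h x) / 2^n = tail_dist n k (conj_exp p) f"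
      using dual[OF p1] by blast
    have hq: "lnorm n (ereal q) h \<le> M * lnorm n (ereal p) h"
      using M_in n h(1) unfolding A1_def by blast
    have "tail_dist n k (conj_exp p) f / M \<le> tail_dist n k (conj_exp q) f"
    proof (rule td_ge)
      fix g assume g: "g \<in> tail_space n k"
      have orth: "(\<Sum>x\<in>cube n. g x * h x) = 0" by (rule tail_orth[OF g deg_le_polys[OF h(1)]])
      have "(\<Sum>x\<in>cube n. f x * h x) = (\<Sum>x\<in>cube n. h x * (f x - g x)) + (\<Sum>x\<in>cube n. g x * h x)"
        by (simp add: sum.distrib[symmetric] algebra_simps)
      hence "tail_dist n k (conj_exp p) f = (\<Sum>x\<in>cube n. h x * (f x - g x)) / 2^n"
        using h(3) orth by simp
      also have "\<dots> \<le> lnorm n (ereal q) h * lnorm n (conj_exp q) (\<lambda>x. f x - g x)"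
        by (rule holder'[OF cq])
      also have "\<dots> \<le> (M * lnorm n (ereal p) h) * lnorm n (conj_exp q) (\<lambda>x. f x - g x)"
        by (rule mult_right_mono[OF hq lnorm_nonneg])
      also have "\<dots> \<le> M * lnorm n (conj_exp q) (\<lambda>x. f x - g x)"
      proof -
        have "M * lnorm n (ereal p) h \<le> M * 1" using h(2) M1 by (intro mult_left_mono) auto
        thus ?thesis using lnorm_nonneg[of n "conj_exp q" "\<lambda>x. f x - g x"]
          by (simp add: mult_right_mono)
      qed
      finally show "tail_dist n k (conj_exp p) f / M \<le> lnorm n (conj_exp q) (\<lambda>x. f x - g x)"
        using M1 by (simp add: divide_le_eq mult.commute)
    qed
    thus "tail_dist n k (conj_exp p) f \<le> M * tail_dist n k (conj_exp q) f"
      using M1 by (simp add: divide_le_eq mult.commute)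
  qed
  have A2low: "M \<le> C" if C: "C \<in> A2" for C
  proof -
    have "C \<in> A1"
      unfolding A1_def
    proof (intro CollectI allI impI)
      fix n h assume n: "k \<le> n" and d: "deg_le n k h"
      obtain f where f: "lnorm n (conj_exp q) f \<le> 1" "(\<Sum>x\<in>cube n. f x * h x) / 2^n = lnorm n (ereal q) h"
        using norming[OF cq, of n h] by blast
      define P where "P = lnorm n (ereal p) h"
      show "lnorm n (ereal q) h \<le> C * lnorm n (ereal p) h"
      proof (cases "P = 0")
        case True
        have "lnorm n (ereal q) h = 0"
          by (rule lnorm_zero) (rule lnorm_eq_zero[OF p0 True[unfolded P_def]])
        thus ?thesis using True unfolding P_def by simp
      next
        case False
        hence Pp: "0 < P" using lnorm_nonneg[of n "ereal p" h] unfolding P_def by simp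
        have "lnorm n (ereal q) h / P \<le> tail_dist n k (conj_exp p) f"
        proof (rule td_ge)
          fix g assume g: "g \<in> tail_space n k"
          have orth: "(\<Sum>x\<in>cube n. g x * h x) = 0" by (rule tail_orth[OF g deg_le_polys[OF d]])
          have "(\<Sum>x\<in>cube n. f x * h x) = (\<Sum>x\<in>cube n. (f x - g x) * h x) + (\<Sum>x\<in>cube n. g x * h x)"
            by (simp add: sum.distrib[symmetric] algebra_simps)
          hence "lnorm n (ereal q) h = (\<Sum>x\<in>cube n. (f x - g x) * h x) / 2^n"
            using f(2) orth by simp
          also have "\<dots> \<le> lnorm n (conj_exp p) (\<lambda>x. f x - g x) * P"
            unfolding P_def by (rule holder'[OF cp'])
          finally show "lnorm n (ereal q) h / P \<le> lnorm n (conj_exp p) (\<lambda>x. f x - g x)"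
            using Pp by (simp add: divide_le_eq)
        qed
        also have "\<dots> \<le> C * tail_dist n k (conj_exp q) f" using C n unfolding A2_def by blast
        finally have r: "lnorm n (ereal q) h / P \<le> C * tail_dist n k (conj_exp q) f" .
        have tq: "tail_dist n k (conj_exp q) f \<le> 1"
        proof -
          have "tail_dist n k (conj_exp q) f \<le> lnorm n (conj_exp q) (\<lambda>x. f x - 0)"
            by (rule td_le[OF tail_zero])
          thus ?thesis using f(1) by simp
        qed
        have tq0: "0 \<le> tail_dist n k (conj_exp q) f" by (rule td_nonneg)
        show ?thesis
        proof (cases "0 \<le> C")
          case True
          have "C * tail_dist n k (conj_exp q) f \<le> C * 1" by (rule mult_left_mono[OF tq True])
          hence "lnorm n (ereal q) h / P \<le> C" using r by simp
          thus ?thesis using Pp unfolding P_def[symmetric] by (simp add: divide_le_eq)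
        next
          case False
          hence "C * tail_dist n k (conj_exp q) f \<le> 0" using tq0 by (simp add: mult_nonpos_nonneg)
          hence "lnorm n (ereal q) h / P \<le> 0" using r by simp
          hence "lnorm n (ereal q) h \<le> 0" using Pp by (simp add: divide_le_eq)
          hence "lnorm n (ereal q) h = 0" using lnorm_nonneg[of n "ereal q" h] by simp
          hence "P = 0" unfolding P_def
            by (intro lnorm_zero) (rule lnorm_eq_zero[OF q0])
          thus ?thesis using Pp by simp
        qed
      qed
    qed
    thus ?thesis by (rule M_le)
  qed
  have "least_elem A1 M" unfolding least_elem_def using M_in M_le by blast
  moreover have "least_elem A2 M" unfolding least_elem_def using MA2 A2low by blast
  ultimately show ?thesis unfolding A1_def A2_def by blast
qed


end
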